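(* The functor $CC:\mathcal{ESP}\to\mathcal{ESP}$ preserves pullbacks.
   Context: $\mathcal{ESP}$ is the category of event structures with polarities (esps) and total maps: an event structure $(E,\le,\mathrm{Con})$ has a partial order with finite down-sets $[e]$ and a consistency relation of finite sets (closed under subsets, containing singletons, closed under adding causes); configurations are finite consistent down-closed sets; a map is a polarity-preserving function sending configurations to configurations and injective on each configuration. $A^\perp$ reverses polarities, $A\parallel B$ is the disjoint union $\{1\}\times A\cup\{2\}\times B$. For an esp $A$, $CC_A$ has the events of $A^\perp\parallel A$ with their polarities; for $c=(i,a)$ let $\bar c=(3-i,a)$; the causal order of $CC_A$ is the transitive closure of $\le_{A^\perp\parallel A}\cup\{(\bar c,c)\mid c\text{ positive in }A^\perp\parallel A\}$, and a finite set is consistent iff its down-closure is consistent in $A^\perp\parallel A$. For a map $f:A\to B$, $CC_f:CC_A\to CC_B$ sends $(i,a)$ to $(i,f(a))$; this defines a functor $CC$. *)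

theory Defs
  imports Main
begin

text \<open>Event structures with polarities. Events of type 'a; the carrier is ev.
  Polarity: True = positive, False = negative.\<close>

record 'a esp =
  ev  :: "'a set"
  leq :: "'a \<Rightarrow> 'a \<Rightarrow> bool"
  con :: "'a set set"
  pol :: "'a \<Rightarrow> bool"

definition es :: "'a esp \<Rightarrow> bool" where
  "es E \<longleftrightarrow>
     (\<forall>x y. leq E x y \<longrightarrow> x \<in> ev E \<and> y \<in> ev E) \<and>
     (\<forall>x\<in>ev E. leq E x x) \<and>
     (\<forall>x y. leq E x y \<and> leq E y x \<longrightarrow> x = y) \<and>
     (\<forall>x y z. leq E x y \<and> leq E y z \<longrightarrow> leq E x z) \<and>
     (\<forall>e\<in>ev E. finite {e'. leq E e' e}) \<and>
     (\<forall>X\<in>con E. finite X \<and> X \<subseteq> ev E) \<and>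
     {} \<in> con E \<and>
     (\<forall>X Y. X \<in> con E \<and> Y \<subseteq> X \<longrightarrow> Y \<in> con E) \<and>
     (\<forall>e\<in>ev E. {e} \<in> con E) \<and>
     (\<forall>X e e'. X \<in> con E \<and> e \<in> X \<and> leq E e' e \<longrightarrow> insert e' X \<in> con E)"

definition config :: "'a esp \<Rightarrow> 'a set \<Rightarrow> bool" where
  "config E x \<longleftrightarrow> finite x \<and> x \<subseteq> ev E \<and> x \<in> con E \<and>
     (\<forall>e\<in>x. \<forall>e'. leq E e' e \<longrightarrow> e' \<in> x)"

definition esp_map :: "'a esp \<Rightarrow> 'b esp \<Rightarrow> ('a \<Rightarrow> 'b) \<Rightarrow> bool" where
  "esp_map A B f \<longleftrightarrow>
     (\<forall>e\<in>ev A. f e \<in> ev B \<and> pol B (f e) = pol A e) \<and>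
     (\<forall>x. config A x \<longrightarrow> config B (f ` x) \<and> inj_on f x)"

definition dual :: "'a esp \<Rightarrow> 'a esp" where
  "dual A = A\<lparr>pol := (\<lambda>e. \<not> pol A e)\<rparr>"

definition par :: "'a esp \<Rightarrow> 'a esp \<Rightarrow> (nat \<times> 'a) esp" where
  "par A B = \<lparr> ev = ({1} \<times> ev A) \<union> ({2} \<times> ev B),
     leq = (\<lambda>(i,a) (j,b). i = j \<and> ((i = 1 \<and> leq A a b) \<or> (i = 2 \<and> leq B a b))),
     con = {X. X \<subseteq> ({1} \<times> ev A) \<union> ({2} \<times> ev B) \<and>
               {a. (1,a) \<in> X} \<in> con A \<and> {b. (2,b) \<in> X} \<in> con B},
     pol = (\<lambda>(i,a). if i = 1 then pol A a else pol B a) \<rparr>"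

definition bar :: "nat \<times> 'a \<Rightarrow> nat \<times> 'a" where
  "bar c = (3 - fst c, snd c)"

definition CC :: "'a esp \<Rightarrow> (nat \<times> 'a) esp" where
  "CC A = (let S = par (dual A) A;
               R = (\<lambda>c d. leq S c d \<or> (d \<in> ev S \<and> pol S d \<and> c = bar d));
               L = tranclp R
           in \<lparr> ev = ev S,
                leq = L,
                con = {X. finite X \<and> X \<subseteq> ev S \<and> {c. \<exists>d\<in>X. L c d} \<in> con S},
                pol = pol S \<rparr>)"

definition CCmap :: "('a \<Rightarrow> 'b) \<Rightarrow> nat \<times> 'a \<Rightarrow> nat \<times> 'b" where
  "CCmap f = (\<lambda>(i,a). (i, f a))"

text \<open>Pullback of f : A \<rightarrow> C, g : B \<rightarrow> C in ESP, with the universal property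
  tested against all esps whose events have type 'q.\<close>
definition is_pullback ::
  "'q itself \<Rightarrow> 'a esp \<Rightarrow> 'b esp \<Rightarrow> 'c esp \<Rightarrow> ('a \<Rightarrow> 'c) \<Rightarrow> ('b \<Rightarrow> 'c)
     \<Rightarrow> 'p esp \<Rightarrow> ('p \<Rightarrow> 'a) \<Rightarrow> ('p \<Rightarrow> 'b) \<Rightarrow> bool" where
  "is_pullback _ A B C f g P p1 p2 \<longleftrightarrow>
     es P \<and> esp_map P A p1 \<and> esp_map P B p2 \<and> (\<forall>e\<in>ev P. f (p1 e) = g (p2 e)) \<and>
     (\<forall>(Q :: 'q esp) q1 q2.
        es Q \<and> esp_map Q A q1 \<and> esp_map Q B q2 \<and> (\<forall>e\<in>ev Q. f (q1 e) = g (q2 e)) \<longrightarrow>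
        (\<exists>h. esp_map Q P h \<and> (\<forall>e\<in>ev Q. p1 (h e) = q1 e \<and> p2 (h e) = q2 e) \<and>
             (\<forall>h'. esp_map Q P h' \<and> (\<forall>e\<in>ev Q. p1 (h' e) = q1 e \<and> p2 (h' e) = q2 e)
                   \<longrightarrow> (\<forall>e\<in>ev Q. h' e = h e))))"

end

theory Submission
  imports Defs
begin




lemma es_c0: "es E \<Longrightarrow> (\<forall>x y. leq E x y \<longrightarrow> x \<in> ev E \<and> y \<in> ev E)"
  unfolding es_def by (elim conjE) assumption
lemma es_c1: "es E \<Longrightarrow> (\<forall>x\<in>ev E. leq E x x)"
  unfolding es_def by (elim conjE) assumption
lemma es_c2: "es E \<Longrightarrow> (\<forall>x y. leq E x y \<and> leq E y x \<longrightarrow> x = y)"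
  unfolding es_def by (elim conjE) assumption
lemma es_c3: "es E \<Longrightarrow> (\<forall>x y z. leq E x y \<and> leq E y z \<longrightarrow> leq E x z)"
  unfolding es_def by (elim conjE) assumption
lemma es_c4: "es E \<Longrightarrow> (\<forall>e\<in>ev E. finite {e'. leq E e' e})"
  unfolding es_def by (elim conjE) assumption
lemma es_c5: "es E \<Longrightarrow> (\<forall>X\<in>con E. finite X \<and> X \<subseteq> ev E)"
  unfolding es_def by (elim conjE) assumption
lemma es_c6: "es E \<Longrightarrow> {} \<in> con E"
  unfolding es_def by (elim conjE) assumption
lemma es_c7: "es E \<Longrightarrow> (\<forall>X Y. X \<in> con E \<and> Y \<subseteq> X \<longrightarrow> Y \<in> con E)"
  unfolding es_def by (elim conjE) assumption
lemma es_c8: "es E \<Longrightarrow> (\<forall>e\<in>ev E. {e} \<in> con E)"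
  unfolding es_def by (elim conjE) assumption
lemma es_c9: "es E \<Longrightarrow> (\<forall>X e e'. X \<in> con E \<and> e \<in> X \<and> leq E e' e \<longrightarrow> insert e' X \<in> con E)"
  unfolding es_def by (elim conjE) assumption


lemma es_D:
  assumes "es E"
  shows "\<And>x y. leq E x y \<Longrightarrow> x \<in> ev E" "\<And>x y. leq E x y \<Longrightarrow> y \<in> ev E"
    "\<And>x. x \<in> ev E \<Longrightarrow> leq E x x"
    "\<And>x y. leq E x y \<Longrightarrow> leq E y x \<Longrightarrow> x = y"
    "\<And>x y z. leq E x y \<Longrightarrow> leq E y z \<Longrightarrow> leq E x z"
    "\<And>e. e \<in> ev E \<Longrightarrow> finite {e'. leq E e' e}"
    "\<And>X. X \<in> con E \<Longrightarrow> finite X" "\<And>X. X \<in> con E \<Longrightarrow> X \<subseteq> ev E"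
    "{} \<in> con E" "\<And>X Y. X \<in> con E \<Longrightarrow> Y \<subseteq> X \<Longrightarrow> Y \<in> con E"
    "\<And>e. e \<in> ev E \<Longrightarrow> {e} \<in> con E"
    "\<And>X e e'. X \<in> con E \<Longrightarrow> e \<in> X \<Longrightarrow> leq E e' e \<Longrightarrow> insert e' X \<in> con E"
  subgoal using es_c0[OF assms] by blast
  subgoal using es_c0[OF assms] by blast
  subgoal using es_c1[OF assms] by blast
  subgoal using es_c2[OF assms] by blast
  subgoal using es_c3[OF assms] by blast
  subgoal using es_c4[OF assms] by blast
  subgoal using es_c5[OF assms] by blast
  subgoal using es_c5[OF assms] by blast
  subgoal using es_c6[OF assms] by blast
  subgoal using es_c7[OF assms] by blast
  subgoal using es_c8[OF assms] by blast
  subgoal using es_c9[OF assms] by blast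
  done

lemma es_I:
  assumes "\<And>x y. leq E x y \<Longrightarrow> x \<in> ev E \<and> y \<in> ev E"
    "\<And>x. x \<in> ev E \<Longrightarrow> leq E x x"
    "\<And>x y. leq E x y \<Longrightarrow> leq E y x \<Longrightarrow> x = y"
    "\<And>x y z. leq E x y \<Longrightarrow> leq E y z \<Longrightarrow> leq E x z"
    "\<And>e. e \<in> ev E \<Longrightarrow> finite {e'. leq E e' e}"
    "\<And>X. X \<in> con E \<Longrightarrow> finite X \<and> X \<subseteq> ev E"
    "{} \<in> con E" "\<And>X Y. X \<in> con E \<Longrightarrow> Y \<subseteq> X \<Longrightarrow> Y \<in> con E"
    "\<And>e. e \<in> ev E \<Longrightarrow> {e} \<in> con E"
    "\<And>X e e'. X \<in> con E \<Longrightarrow> e \<in> X \<Longrightarrow> leq E e' e \<Longrightarrow> insert e' X \<in> con E"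
  shows "es E"
  unfolding es_def
  apply (intro conjI)
  subgoal using assms(1) by blast
  subgoal using assms(2) by blast
  subgoal using assms(3) by blast
  subgoal using assms(4) by blast
  subgoal using assms(5) by blast
  subgoal using assms(6) by blast
  subgoal using assms(7) by blast
  subgoal using assms(8) by blast
  subgoal using assms(9) by blast
  subgoal using assms(10) by blast
  done

lemma configD:
  assumes "config E x"
  shows "finite x" "x \<subseteq> ev E" "x \<in> con E" "\<And>e e'. e \<in> x \<Longrightarrow> leq E e' e \<Longrightarrow> e' \<in> x"
  using assms unfolding config_def by auto

lemma configI:
  assumes "finite x" "x \<subseteq> ev E" "x \<in> con E" "\<And>e e'. e \<in> x \<Longrightarrow> leq E e' e \<Longrightarrow> e' \<in> x"
  shows "config E x"
  using assms unfolding config_def by auto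

definition hist :: "'a esp \<Rightarrow> 'a \<Rightarrow> 'a set" where
  "hist E e = {e'. leq E e' e}"

definition dcl :: "'a esp \<Rightarrow> 'a set \<Rightarrow> 'a set" where
  "dcl E X = {e'. \<exists>e\<in>X. leq E e' e}"

lemma con_add_causes:
  assumes "es E" "X \<in> con E" "finite Y" "Y \<subseteq> dcl E X"
  shows "X \<union> Y \<in> con E"
  using assms(3,4)
proof (induction Y rule: finite_induct)
  case empty then show ?case using assms(2) by simp
next
  case (insert y Y)
  then obtain e where "e \<in> X" "leq E y e" unfolding dcl_def by blast
  then have "insert y (X \<union> Y) \<in> con E"
    using es_D(12)[OF assms(1)] insert by blast
  then show ?case by simp
qed

lemma dcl_finite:
  assumes "es E" "finite X" "X \<subseteq> ev E"
  shows "finite (dcl E X)"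
proof -
  have "dcl E X = (\<Union>e\<in>X. {e'. leq E e' e})" unfolding dcl_def by blast
  then show ?thesis using assms es_D(6)[OF assms(1)] by auto
qed

lemma dcl_config:
  assumes "es E" "X \<in> con E"
  shows "config E (dcl E X)"
proof -
  have fin: "finite X" "X \<subseteq> ev E" using es_D(7,8)[OF assms(1,2)] by auto
  have sub: "X \<subseteq> dcl E X" unfolding dcl_def using fin es_D(3)[OF assms(1)] by blast
  have f: "finite (dcl E X)" using dcl_finite[OF assms(1) fin] .
  have "X \<union> dcl E X \<in> con E" using con_add_causes[OF assms f] by blast
  then have c: "dcl E X \<in> con E" using sub by (simp add: Un_absorb1)
  show ?thesis unfolding config_def
    using f c es_D(8)[OF assms(1) c] es_D(5)[OF assms(1)] unfolding dcl_def by blast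
qed

lemma hist_config:
  assumes "es E" "e \<in> ev E"
  shows "config E (hist E e)"
proof -
  have "dcl E {e} = hist E e" unfolding dcl_def hist_def by auto
  then show ?thesis using dcl_config[OF assms(1) es_D(11)[OF assms]] by simp
qed

lemma config_hist_sub:
  assumes "config E x" "e \<in> x" shows "hist E e \<subseteq> x"
  using assms unfolding config_def hist_def by blast

lemma config_sub_con:
  assumes "es E" "config E x" "y \<subseteq> x" shows "y \<in> con E"
  using assms es_D(10)[OF assms(1)] unfolding config_def by blast

lemma config_downclosed_subset:
  assumes "es E" "config E x" "y \<subseteq> x" "\<forall>e\<in>y. \<forall>e'. leq E e' e \<longrightarrow> e' \<in> y"
  shows "config E y"
proof -
  have "finite y" using assms(2,3) finite_subset unfolding config_def by blast
  moreover have "y \<in> con E" using config_sub_con[OF assms(1-3)] .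
  moreover have "y \<subseteq> ev E" using assms(2,3) unfolding config_def by blast
  ultimately show ?thesis using assms(4) unfolding config_def by blast
qed

lemma esp_mapD:
  assumes "esp_map A B f"
  shows "\<And>e. e \<in> ev A \<Longrightarrow> f e \<in> ev B" "\<And>e. e \<in> ev A \<Longrightarrow> pol B (f e) = pol A e"
    "\<And>x. config A x \<Longrightarrow> config B (f ` x)" "\<And>x. config A x \<Longrightarrow> inj_on f x"
  using assms unfolding esp_map_def by blast+




definition subesp :: "'a esp \<Rightarrow> 'a set \<Rightarrow> ('a \<Rightarrow> bool) \<Rightarrow> 'a esp" where
  "subesp E S pl = \<lparr>ev = ev E \<inter> S, leq = (\<lambda>x y. leq E x y \<and> x \<in> S \<and> y \<in> S),
     con = {X \<in> con E. X \<subseteq> S}, pol = pl\<rparr>"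

lemma subesp_simps[simp]:
  "ev (subesp E S pl) = ev E \<inter> S"
  "leq (subesp E S pl) x y = (leq E x y \<and> x \<in> S \<and> y \<in> S)"
  "con (subesp E S pl) = {X \<in> con E. X \<subseteq> S}"
  "pol (subesp E S pl) = pl"
  unfolding subesp_def by simp_all

lemma es_subesp:
  assumes "es E" shows "es (subesp E S pl)"
proof (rule es_I)
  show "\<And>x y. leq (subesp E S pl) x y \<Longrightarrow> x \<in> ev (subesp E S pl) \<and> y \<in> ev (subesp E S pl)"
    using es_D(1,2)[OF assms] by auto
  show "\<And>x. x \<in> ev (subesp E S pl) \<Longrightarrow> leq (subesp E S pl) x x"
    using es_D(3)[OF assms] by simp
  show "\<And>x y. leq (subesp E S pl) x y \<Longrightarrow> leq (subesp E S pl) y x \<Longrightarrow> x = y"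
    using es_D(4)[OF assms] by simp
  show "\<And>x y z. leq (subesp E S pl) x y \<Longrightarrow> leq (subesp E S pl) y z \<Longrightarrow> leq (subesp E S pl) x z"
    using es_D(5)[OF assms] by (simp, blast)
  show "\<And>e. e \<in> ev (subesp E S pl) \<Longrightarrow> finite {e'. leq (subesp E S pl) e' e}"
  proof -
    fix e assume "e \<in> ev (subesp E S pl)"
    then have "finite {e'. leq E e' e}" using es_D(6)[OF assms] by simp
    then show "finite {e'. leq (subesp E S pl) e' e}" by (rule rev_finite_subset) auto
  qed
  show "\<And>X. X \<in> con (subesp E S pl) \<Longrightarrow> finite X \<and> X \<subseteq> ev (subesp E S pl)"
    using es_D(7,8)[OF assms] by auto
  show "{} \<in> con (subesp E S pl)" using es_D(9)[OF assms] by simp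
  show "\<And>X Y. X \<in> con (subesp E S pl) \<Longrightarrow> Y \<subseteq> X \<Longrightarrow> Y \<in> con (subesp E S pl)"
    using es_D(10)[OF assms] by auto
  show "\<And>e. e \<in> ev (subesp E S pl) \<Longrightarrow> {e} \<in> con (subesp E S pl)"
    using es_D(11)[OF assms] by auto
  show "\<And>X e e'. X \<in> con (subesp E S pl) \<Longrightarrow> e \<in> X \<Longrightarrow> leq (subesp E S pl) e' e \<Longrightarrow>
      insert e' X \<in> con (subesp E S pl)"
    using es_D(12)[OF assms] by auto
qed

lemma config_subesp:
  "config (subesp E S pl) x \<longleftrightarrow> finite x \<and> x \<subseteq> ev E \<and> x \<subseteq> S \<and> x \<in> con E \<and>
     (\<forall>e\<in>x. \<forall>e'. leq E e' e \<and> e' \<in> S \<longrightarrow> e' \<in> x)"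
  unfolding config_def by auto

lemma config_subesp_dc:
  assumes "\<forall>e\<in>S. \<forall>e'. leq E e' e \<longrightarrow> e' \<in> S"
  shows "config (subesp E S pl) x \<longleftrightarrow> config E x \<and> x \<subseteq> S"
  unfolding config_subesp using assms unfolding config_def by blast

definition tr :: "('r \<Rightarrow> 'q) \<Rightarrow> 'r esp \<Rightarrow> 'q esp" where
  "tr j T = \<lparr>ev = j ` ev T,
     leq = (\<lambda>x y. x \<in> j ` ev T \<and> y \<in> j ` ev T \<and> leq T (inv_into (ev T) j x) (inv_into (ev T) j y)),
     con = {X. X \<subseteq> j ` ev T \<and> inv_into (ev T) j ` X \<in> con T},
     pol = (\<lambda>x. pol T (inv_into (ev T) j x))\<rparr>"

lemma tr_simps[simp]:
  "ev (tr j T) = j ` ev T"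
  "leq (tr j T) x y = (x \<in> j ` ev T \<and> y \<in> j ` ev T \<and> leq T (inv_into (ev T) j x) (inv_into (ev T) j y))"
  "con (tr j T) = {X. X \<subseteq> j ` ev T \<and> inv_into (ev T) j ` X \<in> con T}"
  "pol (tr j T) = (\<lambda>x. pol T (inv_into (ev T) j x))"
  unfolding tr_def by simp_all

lemma inv_tr_ev[simp]: "x \<in> j ` ev T \<Longrightarrow> inv_into (ev T) j x \<in> ev T"
  by (simp add: inv_into_into)

lemma inv_tr_img:
  assumes "inj_on j (ev T)" "X \<subseteq> j ` ev T"
  shows "j ` (inv_into (ev T) j ` X) = X"
  using assms by (auto simp: f_inv_into_f image_iff) (metis f_inv_into_f subsetD)

lemma inv_tr_img2:
  assumes "inj_on j (ev T)" "x \<subseteq> ev T"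
  shows "inv_into (ev T) j ` (j ` x) = x"
  using assms by (force simp: inv_into_f_f image_iff subset_iff)

lemma inv_tr_inj:
  assumes "X \<subseteq> j ` ev T" shows "inj_on (inv_into (ev T) j) X"
  by (rule inj_on_inv_into[OF assms])

lemma es_tr:
  assumes "es T" "inj_on j (ev T)"
  shows "es (tr j T)"
proof (rule es_I)
  let ?k = "inv_into (ev T) j"
  show "\<And>x y. leq (tr j T) x y \<Longrightarrow> x \<in> ev (tr j T) \<and> y \<in> ev (tr j T)" by simp
  show "\<And>x. x \<in> ev (tr j T) \<Longrightarrow> leq (tr j T) x x"
  proof -
    fix x assume "x \<in> ev (tr j T)"
    then have "x \<in> j ` ev T" "?k x \<in> ev T" using inv_tr_ev by auto
    then show "leq (tr j T) x x" using es_D(3)[OF assms(1)] by simp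
  qed
  show "\<And>x y. leq (tr j T) x y \<Longrightarrow> leq (tr j T) y x \<Longrightarrow> x = y"
    using es_D(4)[OF assms(1)] by simp (metis f_inv_into_f)
  show "\<And>x y z. leq (tr j T) x y \<Longrightarrow> leq (tr j T) y z \<Longrightarrow> leq (tr j T) x z"
    using es_D(5)[OF assms(1)] by simp blast
  show "\<And>e. e \<in> ev (tr j T) \<Longrightarrow> finite {e'. leq (tr j T) e' e}"
  proof -
    fix e assume e: "e \<in> ev (tr j T)"
    then have "finite {e'. leq T e' (?k e)}" using es_D(6)[OF assms(1)] inv_tr_ev by simp
    then have "finite (j ` {e'. leq T e' (?k e)})" by simp
    moreover have "{e'. leq (tr j T) e' e} \<subseteq> j ` {e'. leq T e' (?k e)}"
      using assms(2) by (auto simp: f_inv_into_f image_iff)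
    ultimately show "finite {e'. leq (tr j T) e' e}" by (rule finite_subset[rotated])
  qed
  show "\<And>X. X \<in> con (tr j T) \<Longrightarrow> finite X \<and> X \<subseteq> ev (tr j T)"
  proof -
    fix X assume "X \<in> con (tr j T)"
    then have X: "X \<subseteq> j ` ev T" "?k ` X \<in> con T" by auto
    then have "finite (?k ` X)" using es_D(7)[OF assms(1)] by blast
    then have "finite X" using finite_imageD inv_tr_inj[OF X(1)] by blast
    then show "finite X \<and> X \<subseteq> ev (tr j T)" using X by simp
  qed
  show "{} \<in> con (tr j T)" using es_D(9)[OF assms(1)] by simp
  show "\<And>X Y. X \<in> con (tr j T) \<Longrightarrow> Y \<subseteq> X \<Longrightarrow> Y \<in> con (tr j T)"
    using es_D(10)[OF assms(1)] by simp (meson image_mono order_trans)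
  show "\<And>e. e \<in> ev (tr j T) \<Longrightarrow> {e} \<in> con (tr j T)"
  proof -
    fix x assume "x \<in> ev (tr j T)"
    then have "x \<in> j ` ev T" "?k x \<in> ev T" using inv_tr_ev by auto
    then show "{x} \<in> con (tr j T)" using es_D(11)[OF assms(1)] by simp
  qed
  show "\<And>X e e'. X \<in> con (tr j T) \<Longrightarrow> e \<in> X \<Longrightarrow> leq (tr j T) e' e \<Longrightarrow>
      insert e' X \<in> con (tr j T)"
  proof -
    fix X e e' assume a: "X \<in> con (tr j T)" "e \<in> X" "leq (tr j T) e' e"
    then have "insert (?k e') (?k ` X) \<in> con T" using es_D(12)[OF assms(1)] by simp blast
    then show "insert e' X \<in> con (tr j T)" using a by simp
  qed
qed

lemma config_tr:
  assumes "es T" "inj_on j (ev T)"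
  shows "config (tr j T) X \<longleftrightarrow> X \<subseteq> j ` ev T \<and> config T (inv_into (ev T) j ` X)"
proof
  let ?k = "inv_into (ev T) j"
  assume c: "config (tr j T) X"
  then have X: "X \<subseteq> j ` ev T" "finite X" "?k ` X \<in> con T" unfolding config_def by auto
  have "?k ` X \<subseteq> ev T"
  proof
    fix y assume "y \<in> ?k ` X"
    then obtain x where "x \<in> X" "y = ?k x" by blast
    then show "y \<in> ev T" using X(1) inv_tr_ev[of x j T] by blast
  qed
  moreover have "\<forall>e\<in>?k ` X. \<forall>e'. leq T e' e \<longrightarrow> e' \<in> ?k ` X"
  proof (intro ballI allI impI)
    fix e e' assume e: "e \<in> ?k ` X" "leq T e' e"
    then obtain x where x: "x \<in> X" "e = ?k x" by blast
    have e'ev: "e' \<in> ev T" using es_D(1)[OF assms(1) e(2)] .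
    have kk: "?k (j e') = e'" using inv_into_f_f[OF assms(2) e'ev] .
    have xj: "x \<in> j ` ev T" using x(1) X(1) by blast
    have je: "j e' \<in> j ` ev T" using e'ev by blast
    have "leq T (?k (j e')) (?k x)" using kk x(2) e(2) by simp
    then have "leq (tr j T) (j e') x" using xj je by simp
    then have "j e' \<in> X" using configD(4)[OF c x(1)] by blast
    then show "e' \<in> ?k ` X" using kk by (metis imageI)
  qed
  ultimately show "X \<subseteq> j ` ev T \<and> config T (?k ` X)"
    using X unfolding config_def by simp
next
  let ?k = "inv_into (ev T) j"
  assume a: "X \<subseteq> j ` ev T \<and> config T (?k ` X)"
  then have X: "X \<subseteq> j ` ev T" "config T (?k ` X)" by auto
  have fin: "finite X" using X(2) finite_imageD inv_tr_inj[OF X(1)] unfolding config_def by blast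
  have con: "X \<in> con (tr j T)" using X unfolding config_def by simp
  have dc: "\<forall>e\<in>X. \<forall>e'. leq (tr j T) e' e \<longrightarrow> e' \<in> X"
  proof (intro ballI allI impI)
    fix e e' assume e: "e \<in> X" "leq (tr j T) e' e"
    then have "?k e' \<in> ?k ` X" using X(2) unfolding config_def by auto
    then obtain x where "x \<in> X" "?k e' = ?k x" by blast
    moreover have "e' \<in> j ` ev T" using e(2) by simp
    ultimately show "e' \<in> X"
    proof -
      assume x: "x \<in> X" "?k e' = ?k x" and e': "e' \<in> j ` ev T"
      have "insert e' X \<subseteq> j ` ev T" using e' X(1) by blast
      then have "inj_on ?k (insert e' X)" by (rule inv_tr_inj)
      then have "e' = x" using x by (auto dest: inj_onD)
      then show ?thesis using x by simp
    qed
  qed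
  show "config (tr j T) X" unfolding config_def using fin X(1) con dc by simp
qed

lemma config_tr_img:
  assumes "es T" "inj_on j (ev T)" "config T x"
  shows "config (tr j T) (j ` x)"
proof -
  have "x \<subseteq> ev T" using assms(3) unfolding config_def by simp
  then show ?thesis using config_tr[OF assms(1,2)] inv_tr_img2[OF assms(2)] assms(3) by auto
qed

lemma map_from_tr:
  assumes "es T" "inj_on j (ev T)" "esp_map T Z u"
  shows "esp_map (tr j T) Z (u \<circ> inv_into (ev T) j)"
  unfolding esp_map_def
proof (intro conjI ballI allI impI)
  let ?k = "inv_into (ev T) j"
  fix e assume "e \<in> ev (tr j T)"
  then have "?k e \<in> ev T" using inv_tr_ev by simp
  then show "(u \<circ> ?k) e \<in> ev Z" "pol Z ((u \<circ> ?k) e) = pol (tr j T) e"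
    using esp_mapD(1,2)[OF assms(3)] by simp_all
next
  let ?k = "inv_into (ev T) j"
  fix x assume "config (tr j T) x"
  then have x: "x \<subseteq> j ` ev T" "config T (?k ` x)" using config_tr[OF assms(1,2)] by auto
  show "config Z ((u \<circ> ?k) ` x)" using esp_mapD(3)[OF assms(3) x(2)] by (simp add: image_comp)
  show "inj_on (u \<circ> ?k) x"
    using esp_mapD(4)[OF assms(3) x(2)] inv_tr_inj[OF x(1)] comp_inj_on by blast
qed

lemma map_to_tr:
  assumes "es T" "inj_on j (ev T)" "esp_map (tr j T) Z v"
  shows "esp_map T Z (v \<circ> j)"
  unfolding esp_map_def
proof (intro conjI ballI allI impI)
  fix e assume e: "e \<in> ev T"
  then have "j e \<in> ev (tr j T)" by simp
  then show "(v \<circ> j) e \<in> ev Z" "pol Z ((v \<circ> j) e) = pol T e"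
    using esp_mapD(1,2)[OF assms(3)] inv_into_f_f[OF assms(2) e] by simp_all
next
  fix x assume x: "config T x"
  then have c: "config (tr j T) (j ` x)" using config_tr_img[OF assms(1,2)] by blast
  show "config Z ((v \<circ> j) ` x)" using esp_mapD(3)[OF assms(3) c] by (simp add: image_comp)
  have "x \<subseteq> ev T" using x unfolding config_def by simp
  then show "inj_on (v \<circ> j) x"
    using esp_mapD(4)[OF assms(3) c] comp_inj_on assms(2) inj_on_subset by blast
qed

section \<open>Universal property for transported tests\<close>

lemma pbD1:
  assumes "is_pullback TYPE('q) A B C f g P p1 p2"
  shows "es P \<and> esp_map P A p1 \<and> esp_map P B p2 \<and> (\<forall>e\<in>ev P. f (p1 e) = g (p2 e))"
  using assms unfolding is_pullback_def by (elim conjE) (intro conjI; assumption)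

lemma pbD:
  assumes "is_pullback TYPE('q) A B C f g P p1 p2"
  shows "es P" "esp_map P A p1" "esp_map P B p2" "\<forall>e\<in>ev P. f (p1 e) = g (p2 e)"
  using pbD1[OF assms] by auto

lemma pbD5:
  assumes "is_pullback TYPE('q) A B C f g P p1 p2"
   "es (Q :: 'q esp)" "esp_map Q A q1" "esp_map Q B q2" "(\<forall>e\<in>ev Q. f (q1 e) = g (q2 e))"
  shows "\<exists>h. esp_map Q P h \<and> (\<forall>e\<in>ev Q. p1 (h e) = q1 e \<and> p2 (h e) = q2 e) \<and>
             (\<forall>h'. esp_map Q P h' \<and> (\<forall>e\<in>ev Q. p1 (h' e) = q1 e \<and> p2 (h' e) = q2 e)
                   \<longrightarrow> (\<forall>e\<in>ev Q. h' e = h e))"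
proof -
  have "\<forall>(Q :: 'q esp) q1 q2.
        es Q \<and> esp_map Q A q1 \<and> esp_map Q B q2 \<and> (\<forall>e\<in>ev Q. f (q1 e) = g (q2 e)) \<longrightarrow>
        (\<exists>h. esp_map Q P h \<and> (\<forall>e\<in>ev Q. p1 (h e) = q1 e \<and> p2 (h e) = q2 e) \<and>
             (\<forall>h'. esp_map Q P h' \<and> (\<forall>e\<in>ev Q. p1 (h' e) = q1 e \<and> p2 (h' e) = q2 e)
                   \<longrightarrow> (\<forall>e\<in>ev Q. h' e = h e)))"
    using assms(1) unfolding is_pullback_def by (elim conjE)
  then show ?thesis using assms(2-5) by blast
qed

lemma pb_exists:
  fixes T :: "'r esp" and j :: "'r \<Rightarrow> 'q"
  assumes pb: "is_pullback TYPE('q) A B C f g P p1 p2"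
    and T: "es T" "inj_on j (ev T)" "esp_map T A t1" "esp_map T B t2" "\<forall>e\<in>ev T. f (t1 e) = g (t2 e)"
  shows "\<exists>h. esp_map T P h \<and> (\<forall>e\<in>ev T. p1 (h e) = t1 e \<and> p2 (h e) = t2 e)"
proof -
  let ?k = "inv_into (ev T) j"
  have "es (tr j T)" using es_tr[OF T(1,2)] .
  moreover have "esp_map (tr j T) A (t1 \<circ> ?k)" "esp_map (tr j T) B (t2 \<circ> ?k)"
    using map_from_tr[OF T(1,2)] T(3,4) by auto
  moreover have "\<forall>e\<in>ev (tr j T). f ((t1 \<circ> ?k) e) = g ((t2 \<circ> ?k) e)"
  proof
    fix e assume "e \<in> ev (tr j T)"
    then have "?k e \<in> ev T" using inv_tr_ev by simp
    then show "f ((t1 \<circ> ?k) e) = g ((t2 \<circ> ?k) e)" using T(5) by simp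
  qed
  ultimately obtain h where h: "esp_map (tr j T) P h"
    "\<forall>e\<in>ev (tr j T). p1 (h e) = (t1 \<circ> ?k) e \<and> p2 (h e) = (t2 \<circ> ?k) e"
    using pbD5[OF pb, of "tr j T"] by blast
  have "esp_map T P (h \<circ> j)" using map_to_tr[OF T(1,2) h(1)] .
  moreover have "\<forall>e\<in>ev T. p1 ((h \<circ> j) e) = t1 e \<and> p2 ((h \<circ> j) e) = t2 e"
    using h(2) inv_into_f_f[OF T(2)] by simp
  ultimately show ?thesis by blast
qed

lemma pb_unique:
  fixes T :: "'r esp" and j :: "'r \<Rightarrow> 'q"
  assumes pb: "is_pullback TYPE('q) A B C f g P p1 p2"
    and T: "es T" "inj_on j (ev T)" "esp_map T A t1" "esp_map T B t2" "\<forall>e\<in>ev T. f (t1 e) = g (t2 e)"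
    and h1: "esp_map T P h1" "\<forall>e\<in>ev T. p1 (h1 e) = t1 e \<and> p2 (h1 e) = t2 e"
    and h2: "esp_map T P h2" "\<forall>e\<in>ev T. p1 (h2 e) = t1 e \<and> p2 (h2 e) = t2 e"
    and e: "e \<in> ev T"
  shows "h1 e = h2 e"
proof -
  let ?k = "inv_into (ev T) j"
  have "es (tr j T)" using es_tr[OF T(1,2)] .
  moreover have "esp_map (tr j T) A (t1 \<circ> ?k)" "esp_map (tr j T) B (t2 \<circ> ?k)"
    using map_from_tr[OF T(1,2)] T(3,4) by auto
  moreover have "\<forall>e\<in>ev (tr j T). f ((t1 \<circ> ?k) e) = g ((t2 \<circ> ?k) e)"
  proof
    fix e assume "e \<in> ev (tr j T)"
    then have "?k e \<in> ev T" using inv_tr_ev by simp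
    then show "f ((t1 \<circ> ?k) e) = g ((t2 \<circ> ?k) e)" using T(5) by simp
  qed
  ultimately obtain h where h:
    "\<forall>h'. esp_map (tr j T) P h' \<and> (\<forall>e\<in>ev (tr j T). p1 (h' e) = (t1 \<circ> ?k) e \<and> p2 (h' e) = (t2 \<circ> ?k) e)
                   \<longrightarrow> (\<forall>e\<in>ev (tr j T). h' e = h e)"
    using pbD5[OF pb, of "tr j T"] by blast
  have m1: "esp_map (tr j T) P (h1 \<circ> ?k)" "esp_map (tr j T) P (h2 \<circ> ?k)"
    using map_from_tr[OF T(1,2)] h1(1) h2(1) by auto
  have c1: "\<forall>e\<in>ev (tr j T). p1 ((h1 \<circ> ?k) e) = (t1 \<circ> ?k) e \<and> p2 ((h1 \<circ> ?k) e) = (t2 \<circ> ?k) e"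
  proof
    fix e assume "e \<in> ev (tr j T)"
    then have "?k e \<in> ev T" using inv_tr_ev by simp
    then show "p1 ((h1 \<circ> ?k) e) = (t1 \<circ> ?k) e \<and> p2 ((h1 \<circ> ?k) e) = (t2 \<circ> ?k) e"
      using h1(2) by simp
  qed
  have c2: "\<forall>e\<in>ev (tr j T). p1 ((h2 \<circ> ?k) e) = (t1 \<circ> ?k) e \<and> p2 ((h2 \<circ> ?k) e) = (t2 \<circ> ?k) e"
  proof
    fix e assume "e \<in> ev (tr j T)"
    then have "?k e \<in> ev T" using inv_tr_ev by simp
    then show "p1 ((h2 \<circ> ?k) e) = (t1 \<circ> ?k) e \<and> p2 ((h2 \<circ> ?k) e) = (t2 \<circ> ?k) e"
      using h2(2) by simp
  qed
  have je: "j e \<in> ev (tr j T)" using e by simp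
  have "(h1 \<circ> ?k) (j e) = h (j e)" using spec[OF h, of "h1 \<circ> ?k"] m1(1) c1 je by blast
  moreover have "(h2 \<circ> ?k) (j e) = h (j e)" using spec[OF h, of "h2 \<circ> ?k"] m1(2) c2 je by blast
  ultimately have "(h1 \<circ> ?k) (j e) = (h2 \<circ> ?k) (j e)" by simp
  then show ?thesis using inv_into_f_f[OF T(2) e] by simp
qed




definition evc :: "'a esp \<Rightarrow> (nat \<times> 'a) set" where
  "evc X = {1} \<times> ev X \<union> {2} \<times> ev X"

definition polc :: "'a esp \<Rightarrow> nat \<times> 'a \<Rightarrow> bool" where
  "polc X c = (if fst c = 1 then \<not> pol X (snd c) else pol X (snd c))"

definition tag :: "nat \<Rightarrow> (nat \<times> 'a) set \<Rightarrow> 'a set" where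
  "tag i Y = {a. (i, a) \<in> Y}"

definition Rcc :: "'a esp \<Rightarrow> nat \<times> 'a \<Rightarrow> nat \<times> 'a \<Rightarrow> bool" where
  "Rcc X c d \<longleftrightarrow> (fst c = fst d \<and> fst c \<in> {1,2} \<and> leq X (snd c) (snd d)) \<or>
     (d \<in> evc X \<and> polc X d \<and> c = bar d)"

lemma par_dual_simps:
  "ev (par (dual X) X) = evc X"
  "leq (par (dual X) X) c d = (fst c = fst d \<and> fst c \<in> {1,2} \<and> leq X (snd c) (snd d))"
  "con (par (dual X) X) = {Y. Y \<subseteq> evc X \<and> tag 1 Y \<in> con X \<and> tag 2 Y \<in> con X}"
  "pol (par (dual X) X) = polc X"
  unfolding par_def dual_def evc_def polc_def tag_def
  by (auto simp: fun_eq_iff split: prod.splits)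

lemma CC_simps:
  "ev (CC X) = evc X"
  "leq (CC X) = tranclp (Rcc X)"
  "con (CC X) = {Y. finite Y \<and> Y \<subseteq> evc X \<and> {c. \<exists>d\<in>Y. tranclp (Rcc X) c d} \<subseteq> evc X \<and>
        tag 1 {c. \<exists>d\<in>Y. tranclp (Rcc X) c d} \<in> con X \<and> tag 2 {c. \<exists>d\<in>Y. tranclp (Rcc X) c d} \<in> con X}"
  "pol (CC X) = polc X"
proof -
  have R: "(\<lambda>c d. leq (par (dual X) X) c d \<or>
       (d \<in> ev (par (dual X) X) \<and> pol (par (dual X) X) d \<and> c = bar d)) = Rcc X"
    unfolding Rcc_def par_dual_simps by (simp add: fun_eq_iff)
  show "ev (CC X) = evc X" "leq (CC X) = tranclp (Rcc X)" "pol (CC X) = polc X"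
    unfolding CC_def Let_def R by (simp_all add: par_dual_simps)
  show "con (CC X) = {Y. finite Y \<and> Y \<subseteq> evc X \<and> {c. \<exists>d\<in>Y. tranclp (Rcc X) c d} \<subseteq> evc X \<and>
        tag 1 {c. \<exists>d\<in>Y. tranclp (Rcc X) c d} \<in> con X \<and> tag 2 {c. \<exists>d\<in>Y. tranclp (Rcc X) c d} \<in> con X}"
    unfolding CC_def Let_def R by (simp add: par_dual_simps)
qed

lemma bar_simps[simp]: "bar (1, a) = (2, a)" "bar (2, a) = (1, a)" "bar (Suc 0, a) = (2, a)"
  unfolding bar_def by simp_all

lemma evc_iff: "(i, a) \<in> evc X \<longleftrightarrow> (i = 1 \<or> i = 2) \<and> a \<in> ev X"
  unfolding evc_def by auto

lemma polc_simps[simp]: "polc X (1, a) = (\<not> pol X a)" "polc X (2, a) = pol X a"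
  "polc X (Suc 0, a) = (\<not> pol X a)"
  unfolding polc_def by simp_all

lemma tag_iff[simp]: "a \<in> tag i Y \<longleftrightarrow> (i, a) \<in> Y"
  unfolding tag_def by simp

lemma CCmap_simp[simp]: "CCmap f (i, a) = (i, f a)"
  unfolding CCmap_def by simp

lemma Rcc_cases:
  assumes "Rcc X c d"
  obtains (le) i a b where "c = (i, a)" "d = (i, b)" "i = 1 \<or> i = 2" "leq X a b"
    | (bar1) a where "c = (2, a)" "d = (1, a)" "a \<in> ev X" "\<not> pol X a"
    | (bar2) a where "c = (1, a)" "d = (2, a)" "a \<in> ev X" "pol X a"
  using assms unfolding Rcc_def evc_def
  by (cases c; cases d) auto

lemma Rcc_ev:
  assumes "es X" "Rcc X c d" shows "c \<in> evc X" "d \<in> evc X"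
proof -
  show "c \<in> evc X" using assms(2)
  proof (cases rule: Rcc_cases)
    case (le i a b) then show ?thesis using es_D(1)[OF assms(1) le(4)] by (auto simp: evc_iff)
  qed (auto simp: evc_iff)
  show "d \<in> evc X" using assms(2)
  proof (cases rule: Rcc_cases)
    case (le i a b) then show ?thesis using es_D(2)[OF assms(1) le(4)] by (auto simp: evc_iff)
  qed (auto simp: evc_iff)
qed

lemma Lcc_ev:
  assumes "es X" "tranclp (Rcc X) c d" shows "c \<in> evc X \<and> d \<in> evc X"
  using assms(2) by induction (auto dest: Rcc_ev[OF assms(1)])

lemma Rcc_leq:
  assumes "es X" "Rcc X c d" shows "leq X (snd c) (snd d)"
  using assms(2) by (cases rule: Rcc_cases) (auto intro: es_D(3)[OF assms(1)])

lemma Lcc_leq: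
  assumes "es X" "tranclp (Rcc X) c d" shows "leq X (snd c) (snd d)"
  using assms(2) by induction (auto dest: Rcc_leq[OF assms(1)] intro: es_D(5)[OF assms(1)])

lemma Lcc_refl:
  assumes "es X" "c \<in> evc X" shows "tranclp (Rcc X) c c"
proof -
  obtain i a where c: "c = (i, a)" "i = 1 \<or> i = 2" "a \<in> ev X" using assms(2) unfolding evc_def by auto
  then have "Rcc X c c" unfolding Rcc_def using es_D(3)[OF assms(1)] by auto
  then show ?thesis by simp
qed

lemma tranclp_dc:
  assumes "tranclp R c d" "\<And>u v. R u v \<Longrightarrow> v \<in> x \<Longrightarrow> u \<in> x" "d \<in> x"
  shows "c \<in> x"
  using assms(1,3)
proof (induction rule: tranclp.induct)
  case (r_into_trancl a b) then show ?case using assms(2) by blast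
next
  case (trancl_into_trancl a b c) then show ?case using assms(2) by blast
qed

lemma config_CC:
  assumes "es X"
  shows "config (CC X) x \<longleftrightarrow> finite x \<and> x \<subseteq> evc X \<and> config X (tag 1 x) \<and> config X (tag 2 x) \<and>
     (\<forall>a. (2, a) \<in> x \<and> pol X a \<longrightarrow> (1, a) \<in> x) \<and> (\<forall>a. (1, a) \<in> x \<and> \<not> pol X a \<longrightarrow> (2, a) \<in> x)"
  (is "?L \<longleftrightarrow> ?R")
proof
  assume c: ?L
  have fin: "finite x" and sub: "x \<subseteq> evc X" using configD(1,2)[OF c] by (simp_all add: CC_simps)
  have con: "x \<in> con (CC X)" using configD(3)[OF c] .
  have dcL: "\<And>u v. tranclp (Rcc X) u v \<Longrightarrow> v \<in> x \<Longrightarrow> u \<in> x" using configD(4)[OF c] by (simp add: CC_simps)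
  have dcR: "\<And>u v. Rcc X u v \<Longrightarrow> v \<in> x \<Longrightarrow> u \<in> x" using dcL by blast
  have dceq: "{c. \<exists>d\<in>x. tranclp (Rcc X) c d} = x"
    using dcL Lcc_refl[OF assms] sub by blast
  have tc: "tag 1 x \<in> con X" "tag 2 x \<in> con X" using con dceq by (simp_all add: CC_simps)
  have tcfg: "config X (tag i x)" if i: "i = 1 \<or> i = 2" for i
  proof (rule configI)
    have "tag i x \<subseteq> snd ` x" by (force simp: image_iff)
    then show "finite (tag i x)" using fin finite_subset by blast
    show "tag i x \<subseteq> ev X" using sub by (auto simp: evc_iff)
    show "tag i x \<in> con X" using tc i by auto
    fix e e' assume "e \<in> tag i x" "leq X e' e"
    then have "Rcc X (i, e') (i, e)" "(i, e) \<in> x" unfolding Rcc_def using i by auto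
    then show "e' \<in> tag i x" using dcR by auto
  qed
  have b1: "\<forall>a. (2, a) \<in> x \<and> pol X a \<longrightarrow> (1, a) \<in> x"
  proof (intro allI impI)
    fix a assume a: "(2, a) \<in> x \<and> pol X a"
    then have "Rcc X (1, a) (2, a)" unfolding Rcc_def using sub by (auto simp: evc_iff)
    then show "(1, a) \<in> x" using dcR a by blast
  qed
  have b2: "\<forall>a. (1, a) \<in> x \<and> \<not> pol X a \<longrightarrow> (2, a) \<in> x"
  proof (intro allI impI)
    fix a assume a: "(1, a) \<in> x \<and> \<not> pol X a"
    then have "Rcc X (2, a) (1, a)" unfolding Rcc_def using sub by (auto simp: evc_iff)
    then show "(2, a) \<in> x" using dcR a by blast
  qed
  show ?R using fin sub tcfg b1 b2 by simp
next
  assume r: ?R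
  then have fin: "finite x" and sub: "x \<subseteq> evc X" and c1: "config X (tag 1 x)" and c2: "config X (tag 2 x)"
    and b1: "\<forall>a. (2, a) \<in> x \<and> pol X a \<longrightarrow> (1, a) \<in> x"
    and b2: "\<forall>a. (1, a) \<in> x \<and> \<not> pol X a \<longrightarrow> (2, a) \<in> x" by auto
  have dcR: "u \<in> x" if "Rcc X u v" "v \<in> x" for u v
    using that(1)
  proof (cases rule: Rcc_cases)
    case (le i a b)
    then have "b \<in> tag i x" using that(2) by simp
    then have "a \<in> tag i x" using configD(4)[OF c1, of b a] configD(4)[OF c2, of b a] le by auto
    then show ?thesis using le by simp
  next
    case (bar1 a) then show ?thesis using b2 that(2) by auto
  next
    case (bar2 a) then show ?thesis using b1 that(2) by auto
  qed
  have dcL: "\<And>u v. tranclp (Rcc X) u v \<Longrightarrow> v \<in> x \<Longrightarrow> u \<in> x"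
    using tranclp_dc[of "Rcc X" _ _ x] dcR by blast
  have dceq: "{c. \<exists>d\<in>x. tranclp (Rcc X) c d} = x"
    using dcL Lcc_refl[OF assms] sub by blast
  show ?L
  proof (rule configI)
    show "finite x" by (rule fin)
    show "x \<subseteq> ev (CC X)" using sub by (simp add: CC_simps)
    show "x \<in> con (CC X)" using fin sub dceq configD(3)[OF c1] configD(3)[OF c2] by (simp add: CC_simps)
    show "\<And>e e'. e \<in> x \<Longrightarrow> leq (CC X) e' e \<Longrightarrow> e' \<in> x" using dcL by (simp add: CC_simps)
  qed
qed




lemma Lcc_same:
  assumes "es X" "tranclp (Rcc X) c d"
  shows "snd c = snd d \<longrightarrow> c = d \<or> polc X d"
  using assms(2)
proof (induction rule: tranclp.induct)
  case (r_into_trancl a b)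
  then show ?case
  proof (cases rule: Rcc_cases)
    case (le i a b) then show ?thesis by simp
  qed auto
next
  case (trancl_into_trancl a b c)
  show ?case
  proof
    assume s: "snd a = snd c"
    have l1: "leq X (snd a) (snd b)" using Lcc_leq[OF assms(1) trancl_into_trancl(1)] .
    have l2: "leq X (snd b) (snd c)" using Rcc_leq[OF assms(1) trancl_into_trancl(2)] .
    have sb: "snd b = snd a" using es_D(4)[OF assms(1)] l1 l2 s by metis
    from trancl_into_trancl(2) show "a = c \<or> polc X c"
    proof (cases rule: Rcc_cases)
      case (le i u v)
      then have "b = c" using sb s by simp
      then show ?thesis using trancl_into_trancl(3) sb by simp
    qed auto
  qed
qed

lemma es_CC:
  assumes "es X" shows "es (CC X)"
proof (rule es_I)
  let ?L = "tranclp (Rcc X)"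
  show "\<And>x y. leq (CC X) x y \<Longrightarrow> x \<in> ev (CC X) \<and> y \<in> ev (CC X)"
    using Lcc_ev[OF assms] by (simp add: CC_simps)
  show "\<And>x. x \<in> ev (CC X) \<Longrightarrow> leq (CC X) x x"
    using Lcc_refl[OF assms] by (simp add: CC_simps)
  show "\<And>x y z. leq (CC X) x y \<Longrightarrow> leq (CC X) y z \<Longrightarrow> leq (CC X) x z"
    by (simp add: CC_simps)
  show "\<And>x y. leq (CC X) x y \<Longrightarrow> leq (CC X) y x \<Longrightarrow> x = y"
  proof -
    fix x y assume a: "leq (CC X) x y" "leq (CC X) y x"
    then have L: "?L x y" "?L y x" by (simp_all add: CC_simps)
    have s: "snd x = snd y" using Lcc_leq[OF assms L(1)] Lcc_leq[OF assms L(2)] es_D(4)[OF assms] by blast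
    show "x = y"
    proof (rule ccontr)
      assume ne: "x \<noteq> y"
      then have p: "polc X x" "polc X y" using Lcc_same[OF assms L(1)] Lcc_same[OF assms L(2)] s by auto
      have "x \<in> evc X" "y \<in> evc X" using Lcc_ev[OF assms L(1)] by auto
      then obtain i j a where "x = (i, a)" "y = (j, a)" "i = 1 \<or> i = 2" "j = 1 \<or> j = 2"
        using s unfolding evc_def by auto
      then show False using ne p by auto
    qed
  qed
  show "\<And>e. e \<in> ev (CC X) \<Longrightarrow> finite {e'. leq (CC X) e' e}"
  proof -
    fix e assume e: "e \<in> ev (CC X)"
    then have "snd e \<in> ev X" by (auto simp: CC_simps evc_def)
    then have "finite ({1,2} \<times> {a. leq X a (snd e)})" using es_D(6)[OF assms] by simp
    moreover have "{e'. leq (CC X) e' e} \<subseteq> {1,2} \<times> {a. leq X a (snd e)}"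
    proof
      fix c assume "c \<in> {e'. leq (CC X) e' e}"
      then have "?L c e" by (simp add: CC_simps)
      then have "leq X (snd c) (snd e)" "c \<in> evc X" using Lcc_leq[OF assms] Lcc_ev[OF assms] by auto
      then show "c \<in> {1,2} \<times> {a. leq X a (snd e)}" by (cases c) (auto simp: evc_iff)
    qed
    ultimately show "finite {e'. leq (CC X) e' e}" by (rule finite_subset[rotated])
  qed
  show "\<And>Y. Y \<in> con (CC X) \<Longrightarrow> finite Y \<and> Y \<subseteq> ev (CC X)"
    by (simp add: CC_simps)
  show "{} \<in> con (CC X)"
    using es_D(9)[OF assms] by (simp add: CC_simps tag_def)
  have tagmono: "tag i A \<subseteq> tag i B" if "A \<subseteq> B" for i and A B :: "(nat \<times> 'a) set"
    using that by auto
  show "\<And>Y Z. Y \<in> con (CC X) \<Longrightarrow> Z \<subseteq> Y \<Longrightarrow> Z \<in> con (CC X)"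
  proof -
    fix Y Z assume Y: "Y \<in> con (CC X)" and Z: "Z \<subseteq> Y"
    let ?dY = "{c. \<exists>d\<in>Y. ?L c d}" and ?dZ = "{c. \<exists>d\<in>Z. ?L c d}"
    have sub: "?dZ \<subseteq> ?dY" using Z by blast
    have "finite Y" "Y \<subseteq> evc X" "?dY \<subseteq> evc X" "tag 1 ?dY \<in> con X" "tag 2 ?dY \<in> con X"
      using Y by (simp_all add: CC_simps)
    then show "Z \<in> con (CC X)"
      using Z sub es_D(10)[OF assms] tagmono[OF sub] finite_subset
      by (simp add: CC_simps) blast
  qed
  show "\<And>e. e \<in> ev (CC X) \<Longrightarrow> {e} \<in> con (CC X)"
  proof -
    fix e assume e: "e \<in> ev (CC X)"
    then have se: "snd e \<in> ev X" "e \<in> evc X" by (auto simp: CC_simps evc_def)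
    let ?d = "{c. \<exists>d\<in>{e}. ?L c d}"
    have hc: "hist X (snd e) \<in> con X" using configD(3)[OF hist_config[OF assms se(1)]] .
    have "tag i ?d \<subseteq> hist X (snd e)" for i
      using Lcc_leq[OF assms] unfolding hist_def by fastforce
    then have "tag i ?d \<in> con X" for i using es_D(10)[OF assms hc] by blast
    moreover have "?d \<subseteq> evc X" using Lcc_ev[OF assms] by blast
    ultimately show "{e} \<in> con (CC X)" using se by (simp add: CC_simps)
  qed
  show "\<And>Y e e'. Y \<in> con (CC X) \<Longrightarrow> e \<in> Y \<Longrightarrow> leq (CC X) e' e \<Longrightarrow> insert e' Y \<in> con (CC X)"
  proof -
    fix Y e e' assume a: "Y \<in> con (CC X)" "e \<in> Y" "leq (CC X) e' e"
    then have L: "?L e' e" by (simp add: CC_simps)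
    have eq: "{c. \<exists>d\<in>insert e' Y. ?L c d} = {c. \<exists>d\<in>Y. ?L c d}"
      using L a(2) tranclp_trans[of "Rcc X" _ e' e] by blast
    have "e' \<in> evc X" using Lcc_ev[OF assms L] by simp
    then show "insert e' Y \<in> con (CC X)" using a(1) eq by (simp add: CC_simps)
  qed
qed

lemma CCmap_map:
  assumes "es X" "es Y" "esp_map X Y f"
  shows "esp_map (CC X) (CC Y) (CCmap f)"
  unfolding esp_map_def
proof (intro conjI ballI allI impI)
  fix c assume "c \<in> ev (CC X)"
  then obtain i a where c: "c = (i, a)" "i = 1 \<or> i = 2" "a \<in> ev X" by (auto simp: CC_simps evc_def)
  show "CCmap f c \<in> ev (CC Y)" using c esp_mapD(1)[OF assms(3)] by (auto simp: CC_simps evc_iff)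
  show "pol (CC Y) (CCmap f c) = pol (CC X) c" using c esp_mapD(2)[OF assms(3)]
    by (auto simp: CC_simps)
next
  fix x assume x: "config (CC X) x"
  then have fin: "finite x" and sub: "x \<subseteq> evc X" and c1: "config X (tag 1 x)" and c2: "config X (tag 2 x)"
    and b1: "\<forall>a. (2, a) \<in> x \<and> pol X a \<longrightarrow> (1, a) \<in> x"
    and b2: "\<forall>a. (1, a) \<in> x \<and> \<not> pol X a \<longrightarrow> (2, a) \<in> x" using config_CC[OF assms(1)] by auto
  have tagimg: "tag i (CCmap f ` x) = f ` tag i x" for i
    by (force simp: image_iff CCmap_def)
  have evx: "a \<in> ev X" if "(i, a) \<in> x" for i a using that sub by (auto simp: evc_iff)
  show "config (CC Y) (CCmap f ` x)"
    unfolding config_CC[OF assms(2)]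
  proof (intro conjI allI impI)
    show "finite (CCmap f ` x)" using fin by simp
    show "CCmap f ` x \<subseteq> evc Y" using sub esp_mapD(1)[OF assms(3)]
      by (force simp: evc_iff CCmap_def)
    show "config Y (tag 1 (CCmap f ` x))" "config Y (tag 2 (CCmap f ` x))"
      using esp_mapD(3)[OF assms(3) c1] esp_mapD(3)[OF assms(3) c2] tagimg by simp_all
    fix b
    show "(1, b) \<in> CCmap f ` x" if a0: "(2, b) \<in> CCmap f ` x \<and> pol Y b"
    proof -
      obtain a where a: "(2, a) \<in> x" "b = f a" using a0 by (force simp: CCmap_def)
      then have "pol X a" using a0 esp_mapD(2)[OF assms(3) evx[OF a(1)]] by simp
      then have "(1, a) \<in> x" using b1 a by blast
      then show ?thesis using a by force
    qed
    show "(2, b) \<in> CCmap f ` x" if a0: "(1, b) \<in> CCmap f ` x \<and> \<not> pol Y b"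
    proof -
      obtain a where a: "(1, a) \<in> x" "b = f a" using a0 by (force simp: CCmap_def)
      then have "\<not> pol X a" using a0 esp_mapD(2)[OF assms(3) evx[OF a(1)]] by simp
      then have "(2, a) \<in> x" using b2 a by blast
      then show ?thesis using a by force
    qed
  qed
  show "inj_on (CCmap f) x"
  proof (rule inj_onI)
    fix c d assume cd: "c \<in> x" "d \<in> x" "CCmap f c = CCmap f d"
    obtain i a where c: "c = (i, a)" "i = 1 \<or> i = 2" using cd(1) sub by (cases c) (auto simp: evc_iff)
    obtain j b where d: "d = (j, b)" using cd(2) by (cases d)
    have ij: "i = j" "f a = f b" using cd(3) c d by auto
    have "a \<in> tag i x" "b \<in> tag i x" using cd c d ij by auto
    then have "a = b" using esp_mapD(4)[OF assms(3) c1] esp_mapD(4)[OF assms(3) c2] c(2) ij(2)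
      by (auto dest: inj_onD)
    then show "c = d" using c d ij by simp
  qed
qed




definition PBa :: "'q itself \<Rightarrow> 'a esp \<Rightarrow> 'b esp \<Rightarrow> 'c esp \<Rightarrow> ('a \<Rightarrow> 'c) \<Rightarrow> ('b \<Rightarrow> 'c)
     \<Rightarrow> 'p esp \<Rightarrow> ('p \<Rightarrow> 'a) \<Rightarrow> ('p \<Rightarrow> 'b) \<Rightarrow> bool" where
  "PBa q A B C f g P p1 p2 \<longleftrightarrow> es A \<and> es B \<and> es C \<and> esp_map A C f \<and> esp_map B C g \<and>
     is_pullback q A B C f g P p1 p2"

definition shist :: "'a esp \<Rightarrow> 'a \<Rightarrow> 'a set" where
  "shist E e = hist E e - {e}"

lemma map_subesp:
  assumes "es P" "esp_map P Z u" "\<forall>e\<in>H. \<forall>e'. leq P e' e \<longrightarrow> e' \<in> H"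
  shows "esp_map (subesp P H (pol P)) Z u"
  unfolding esp_map_def
proof (intro conjI ballI allI impI)
  fix e assume "e \<in> ev (subesp P H (pol P))"
  then show "u e \<in> ev Z" "pol Z (u e) = pol (subesp P H (pol P)) e" using esp_mapD(1,2)[OF assms(2)] by auto
next
  fix x assume "config (subesp P H (pol P)) x"
  then have "config P x" using config_subesp_dc[OF assms(3)] by blast
  then show "config Z (u ` x)" "inj_on u x" using esp_mapD(3,4)[OF assms(2)] by auto
qed

lemma hist_dc:
  assumes "es P" shows "\<forall>e\<in>hist P s. \<forall>e'. leq P e' e \<longrightarrow> e' \<in> hist P s"
  using es_D(5)[OF assms] unfolding hist_def by blast

lemma hist_fin: assumes "es P" "s \<in> ev P" shows "finite (hist P s)"
  using es_D(6)[OF assms] unfolding hist_def .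

lemma hist_self: assumes "es P" "s \<in> ev P" shows "s \<in> hist P s"
  using es_D(3)[OF assms] unfolding hist_def by simp

lemma hist_ev: assumes "es P" shows "hist P s \<subseteq> ev P"
  using es_D(1)[OF assms] unfolding hist_def by blast

lemma hist_mono: assumes "es P" "r \<in> hist P s" shows "hist P r \<subseteq> hist P s"
  using es_D(5)[OF assms(1)] assms(2) unfolding hist_def by blast

lemma hist_eq_config:
  assumes "es P" "s \<in> ev P" "config P x" "s \<in> x" "x \<subseteq> hist P s"
  shows "x = hist P s"
  using config_hist_sub[OF assms(3,4)] assms(5) by blast

definition lnk :: "'a esp \<Rightarrow> 'b esp \<Rightarrow> 'p esp \<Rightarrow> ('p \<Rightarrow> 'a) \<Rightarrow> ('p \<Rightarrow> 'b) \<Rightarrow> 'p \<Rightarrow> 'p \<Rightarrow> bool" where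
  "lnk A B P p1 p2 u v \<longleftrightarrow> leq P u v \<and> (leq A (p1 u) (p1 v) \<or> leq B (p2 u) (p2 v))"

definition TG :: "'a esp \<Rightarrow> 'b esp \<Rightarrow> 'p esp \<Rightarrow> ('p \<Rightarrow> 'a) \<Rightarrow> ('p \<Rightarrow> 'b) \<Rightarrow> 'p \<Rightarrow> 'p esp" where
  "TG A B P p1 p2 t = \<lparr>ev = hist P t,
     leq = (\<lambda>x y. x \<in> hist P t \<and> y \<in> hist P t \<and> (lnk A B P p1 p2)\<^sup>*\<^sup>* x y),
     con = Pow (hist P t), pol = pol P\<rparr>"

lemma TG_simps[simp]:
  "ev (TG A B P p1 p2 t) = hist P t"
  "leq (TG A B P p1 p2 t) x y = (x \<in> hist P t \<and> y \<in> hist P t \<and> (lnk A B P p1 p2)\<^sup>*\<^sup>* x y)"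
  "con (TG A B P p1 p2 t) = Pow (hist P t)"
  "pol (TG A B P p1 p2 t) = pol P"
  unfolding TG_def by simp_all

lemma lnk_leq:
  assumes "es P" "(lnk A B P p1 p2)\<^sup>*\<^sup>* x y" "y \<in> ev P"
  shows "leq P x y"
  using assms(2,3)
proof (induction rule: converse_rtranclp_induct)
  case base then show ?case using es_D(3)[OF assms(1)] by simp
next
  case (step u v)
  then show ?case using es_D(5)[OF assms(1)] unfolding lnk_def by blast
qed

lemma es_TG:
  assumes "es P" "t \<in> ev P"
  shows "es (TG A B P p1 p2 t)"
proof (rule es_I)
  let ?T = "TG A B P p1 p2 t" and ?H = "hist P t"
  have Hev: "?H \<subseteq> ev P" using hist_ev[OF assms(1)] .
  have Hfin: "finite ?H" using hist_fin[OF assms] .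
  show "\<And>x y. leq ?T x y \<Longrightarrow> x \<in> ev ?T \<and> y \<in> ev ?T" by simp
  show "\<And>x. x \<in> ev ?T \<Longrightarrow> leq ?T x x" by simp
  show "\<And>x y. leq ?T x y \<Longrightarrow> leq ?T y x \<Longrightarrow> x = y"
  proof -
    fix x y assume a: "leq ?T x y" "leq ?T y x"
    then have "x \<in> ev P" "y \<in> ev P" using Hev by auto
    then have "leq P x y" "leq P y x" using lnk_leq[OF assms(1)] a by auto
    then show "x = y" using es_D(4)[OF assms(1)] by blast
  qed
  show "\<And>x y z. leq ?T x y \<Longrightarrow> leq ?T y z \<Longrightarrow> leq ?T x z"
    by (simp, meson rtranclp_trans)
  show "\<And>e. e \<in> ev ?T \<Longrightarrow> finite {e'. leq ?T e' e}"
    using Hfin by (simp add: finite_subset[of _ ?H] subset_iff)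
  show "\<And>X. X \<in> con ?T \<Longrightarrow> finite X \<and> X \<subseteq> ev ?T"
    using Hfin by (auto intro: finite_subset)
  show "{} \<in> con ?T" by simp
  show "\<And>X Y. X \<in> con ?T \<Longrightarrow> Y \<subseteq> X \<Longrightarrow> Y \<in> con ?T" by auto
  show "\<And>e. e \<in> ev ?T \<Longrightarrow> {e} \<in> con ?T" by simp
  show "\<And>X e e'. X \<in> con ?T \<Longrightarrow> e \<in> X \<Longrightarrow> leq ?T e' e \<Longrightarrow> insert e' X \<in> con ?T" by simp
qed

lemma map_TG:
  assumes "es P" "t \<in> ev P" "es Z" "esp_map P Z u"
    and lk: "\<And>s s'. leq P s' s \<Longrightarrow> leq Z (u s') (u s) \<Longrightarrow> lnk A B P p1 p2 s' s"
  shows "esp_map (TG A B P p1 p2 t) Z u"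
proof -
  let ?T = "TG A B P p1 p2 t" and ?H = "hist P t"
  have Hev: "?H \<subseteq> ev P" using hist_ev[OF assms(1)] .
  have Hcfg: "config P ?H" using hist_config[OF assms(1,2)] .
  have evp: "u e \<in> ev Z \<and> pol Z (u e) = pol ?T e" if "e \<in> ev ?T" for e
    using esp_mapD(1,2)[OF assms(4)] that Hev by auto
  have cfg: "config Z (u ` x) \<and> inj_on u x" if x: "config ?T x" for x
  proof -
    have xH: "x \<subseteq> ?H" "finite x" using configD(1,2)[OF x] by auto
    have dcx: "\<And>e e'. e \<in> x \<Longrightarrow> leq ?T e' e \<Longrightarrow> e' \<in> x" using configD(4)[OF x] .
    have uH: "config Z (u ` ?H)" "inj_on u ?H" using esp_mapD(3,4)[OF assms(4) Hcfg] by auto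
    have "config Z (u ` x)"
    proof (rule configI)
      show "finite (u ` x)" using xH by simp
      show "u ` x \<subseteq> ev Z" using configD(2)[OF uH(1)] xH by blast
      show "u ` x \<in> con Z" using es_D(10)[OF assms(3) configD(3)[OF uH(1)]] xH by blast
      fix a a' assume a: "a \<in> u ` x" "leq Z a' a"
      then obtain s where s: "s \<in> x" "a = u s" by blast
      have sev: "s \<in> ev P" using s xH Hev by blast
      have hs: "config Z (u ` hist P s)" using esp_mapD(3)[OF assms(4) hist_config[OF assms(1) sev]] .
      have "u s \<in> u ` hist P s" using hist_self[OF assms(1) sev] by blast
      then have "a' \<in> u ` hist P s" using configD(4)[OF hs] a(2) s(2) by blast
      then obtain s' where s': "s' \<in> hist P s" "a' = u s'" by blast
      have l: "leq P s' s" using s'(1) unfolding hist_def by simp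
      have "lnk A B P p1 p2 s' s" using lk[OF l] a(2) s(2) s'(2) by simp
      moreover have "s \<in> ?H" using s xH by blast
      moreover have "s' \<in> ?H" using hist_mono[OF assms(1) \<open>s \<in> ?H\<close>] s'(1) by blast
      ultimately have "leq ?T s' s" by simp
      then have "s' \<in> x" using dcx s(1) by blast
      then show "a' \<in> u ` x" using s' by blast
    qed
    moreover have "inj_on u x" using uH(2) xH inj_on_subset by blast
    ultimately show ?thesis by simp
  qed
  show ?thesis unfolding esp_map_def using evp cfg by blast
qed

lemma img_hist:
  assumes "es P" "esp_map P Z u" "x0 \<in> ev P" "leq Z a (u x0)"
  shows "\<exists>v\<in>hist P x0. u v = a"
proof -
  have c: "config Z (u ` hist P x0)" using esp_mapD(3)[OF assms(2) hist_config[OF assms(1,3)]] .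
  have "u x0 \<in> u ` hist P x0" using hist_self[OF assms(1,3)] by blast
  then have "a \<in> u ` hist P x0" using configD(4)[OF c] assms(4) by blast
  then show ?thesis by auto
qed

lemma hist_shist: assumes "es P" "s \<in> ev P" shows "hist P s = insert s (shist P s)"
  using hist_self[OF assms] unfolding shist_def by blast

context
  fixes A :: "'a esp" and B :: "'b esp" and C :: "'c esp" and f :: "'a \<Rightarrow> 'c" and g :: "'b \<Rightarrow> 'c"
    and P :: "'p esp" and p1 :: "'p \<Rightarrow> 'a" and p2 :: "'p \<Rightarrow> 'b"
  assumes PB: "PBa TYPE('q) A B C f g P p1 p2"
begin

lemma PB_facts: "es A" "es B" "es C" "esp_map A C f" "esp_map B C g"
  "is_pullback TYPE('q) A B C f g P p1 p2"
  using PB unfolding PBa_def by auto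

lemma esP: "es P" using pbD(1)[OF PB_facts(6)] .
lemma p1map: "esp_map P A p1" using pbD(2)[OF PB_facts(6)] .
lemma p2map: "esp_map P B p2" using pbD(3)[OF PB_facts(6)] .
lemma pcomm: "e \<in> ev P \<Longrightarrow> f (p1 e) = g (p2 e)" using pbD(4)[OF PB_facts(6)] by blast

lemma pol_eq:
  assumes "s \<in> ev P" "s' \<in> ev P" "p1 s' = p1 s" shows "pol P s' = pol P s"
  using esp_mapD(2)[OF p1map assms(1)] esp_mapD(2)[OF p1map assms(2)] assms(3) by simp

lemma R2:
  fixes j :: "'p \<Rightarrow> 'q"
  assumes j: "inj_on j (hist P s)" and s: "s \<in> ev P" "s' \<in> ev P" and pr: "p1 s' = p1 s" "p2 s' = p2 s"
    and ns: "s' \<notin> shist P s" and cfg: "config P (insert s' (shist P s))"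
  shows "s' = s"
proof -
  let ?H = "hist P s"
  let ?T = "subesp P ?H (pol P)"
  have dc: "\<forall>e\<in>?H. \<forall>e'. leq P e' e \<longrightarrow> e' \<in> ?H" using hist_dc[OF esP] .
  have esT: "es ?T" using es_subesp[OF esP] .
  have jT: "inj_on j (ev ?T)" using j inj_on_subset by fastforce
  have m1: "esp_map ?T A p1" using map_subesp[OF esP p1map dc] .
  have m2: "esp_map ?T B p2" using map_subesp[OF esP p2map dc] .
  have cm: "\<forall>e\<in>ev ?T. f (p1 e) = g (p2 e)" using pcomm by simp
  have alpha: "esp_map ?T P id"
    unfolding esp_map_def using config_subesp_dc[OF dc] by auto
  define \<beta> where "\<beta> = (\<lambda>r. if r = s then s' else r)"
  have sH: "s \<in> ?H" using hist_self[OF esP s(1)] .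
  have beta_ev: "\<beta> e \<in> ev P \<and> pol P (\<beta> e) = pol ?T e" if "e \<in> ev ?T" for e
    unfolding \<beta>_def using s pol_eq[OF s pr(1)] that by auto
  have beta_cfg: "config P (\<beta> ` x) \<and> inj_on \<beta> x" if "config ?T x" for x
  proof -
    have x: "config P x" "x \<subseteq> ?H" using config_subesp_dc[OF dc] that by auto
    show "config P (\<beta> ` x) \<and> inj_on \<beta> x"
    proof (cases "s \<in> x")
      case True
      have xH: "x = ?H" using hist_eq_config[OF esP s(1) x(1) True x(2)] .
      have "\<beta> ` x = insert s' (shist P s)" unfolding xH \<beta>_def shist_def using sH by auto
      moreover have "inj_on \<beta> x" unfolding xH \<beta>_def inj_on_def using ns unfolding shist_def by auto
      ultimately show ?thesis using cfg by simp
    next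
      case False
      then have "\<beta> ` x = x" "inj_on \<beta> x" unfolding \<beta>_def inj_on_def by auto
      then show ?thesis using x(1) by simp
    qed
  qed
  have beta: "esp_map ?T P \<beta>"
    unfolding esp_map_def using beta_ev beta_cfg by blast
  have c2: "\<forall>e\<in>ev ?T. p1 (\<beta> e) = p1 e \<and> p2 (\<beta> e) = p2 e"
    unfolding \<beta>_def using pr by auto
  have c1: "\<forall>e\<in>ev ?T. p1 (id e) = p1 e \<and> p2 (id e) = p2 e" by simp
  have sT: "s \<in> ev ?T" using sH s(1) by simp
  have "id s = \<beta> s"
    using pb_unique[OF PB_facts(6) esT jT m1 m2 cm alpha c1 beta c2 sT] .
  then show ?thesis unfolding \<beta>_def by simp
qed


lemma G:
  fixes j :: "'p \<Rightarrow> 'q"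
  assumes j: "inj_on j (hist P t)" and t: "t \<in> ev P" and r: "r \<in> hist P t"
  shows "(lnk A B P p1 p2)\<^sup>*\<^sup>* r t"
proof -
  let ?T = "TG A B P p1 p2 t" and ?H = "hist P t" and ?L = "(lnk A B P p1 p2)\<^sup>*\<^sup>*"
  have Hev: "?H \<subseteq> ev P" using hist_ev[OF esP] .
  have esT: "es ?T" using es_TG[OF esP t] .
  have jT: "inj_on j (ev ?T)" using j by simp
  have m1: "esp_map ?T A p1"
    by (rule map_TG[OF esP t PB_facts(1) p1map]) (simp add: lnk_def)
  have m2: "esp_map ?T B p2"
    by (rule map_TG[OF esP t PB_facts(2) p2map]) (simp add: lnk_def)
  have cm: "\<forall>e\<in>ev ?T. f (p1 e) = g (p2 e)" using pcomm Hev by auto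
  obtain h where h: "esp_map ?T P h" "\<forall>e\<in>ev ?T. p1 (h e) = p1 e \<and> p2 (h e) = p2 e"
    using pb_exists[OF PB_facts(6) esT jT m1 m2 cm] by blast
  have hist_cfgT: "config ?T (hist P s)" if "s \<in> ?H" for s
  proof (rule configI)
    have sev: "s \<in> ev P" using that Hev by blast
    show "finite (hist P s)" using hist_fin[OF esP sev] .
    show "hist P s \<subseteq> ev ?T" using hist_mono[OF esP that] by simp
    then show "hist P s \<in> con ?T" by simp
    fix e e' assume a: "e \<in> hist P s" "leq ?T e' e"
    then have "e \<in> ev P" using Hev by auto
    then have "leq P e' e" using lnk_leq[OF esP] a(2) by auto
    then show "e' \<in> hist P s" using es_D(5)[OF esP] a(1) unfolding hist_def by blast
  qed
  have hid: "\<forall>s. card (hist P s) = n \<longrightarrow> s \<in> ?H \<longrightarrow> h s = s" for n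
  proof (induction n rule: less_induct)
    case (less n)
    show ?case
    proof (intro allI impI)
      fix s assume sn: "card (hist P s) = n" and sH: "s \<in> ?H"
      have sev: "s \<in> ev P" using sH Hev by blast
      have IH: "h r = r" if "r \<in> shist P s" for r
      proof -
        have rs: "r \<in> hist P s" "r \<noteq> s" using that unfolding shist_def by auto
        have "hist P r \<subseteq> hist P s" using hist_mono[OF esP rs(1)] .
        moreover have "s \<notin> hist P r"
          using rs es_D(4)[OF esP] unfolding hist_def by auto
        ultimately have "hist P r \<subset> hist P s" using hist_self[OF esP sev] by blast
        then have "card (hist P r) < n" using sn hist_fin[OF esP sev] psubset_card_mono by blast
        moreover have "r \<in> ?H" using hist_mono[OF esP sH] rs(1) by blast
        ultimately show ?thesis using less by blast
      qed
      have cT: "config ?T (hist P s)" using hist_cfgT[OF sH] .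
      have hc: "config P (h ` hist P s)" "inj_on h (hist P s)" using esp_mapD(3,4)[OF h(1) cT] by auto
      have sself: "s \<in> hist P s" using hist_self[OF esP sev] .
      have img: "h ` hist P s = insert (h s) (shist P s)"
      proof -
        have "hist P s = insert s (shist P s)" using sself unfolding shist_def by blast
        then have "h ` hist P s = insert (h s) (h ` shist P s)" by (metis image_insert)
        moreover have "h ` shist P s = shist P s" using IH by (simp add: image_cong)
        ultimately show ?thesis by simp
      qed
      have ns: "h s \<notin> shist P s"
      proof
        assume "h s \<in> shist P s"
        then have "h (h s) = h s" "h s \<noteq> s" "h s \<in> hist P s" using IH unfolding shist_def by auto
        then show False using hc(2) sself unfolding inj_on_def by metis
      qed
      have hsev: "h s \<in> ev P" using esp_mapD(1)[OF h(1)] sH by simp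
      have jj: "inj_on j (hist P s)" using j hist_mono[OF esP sH] inj_on_subset by blast
      have pr: "p1 (h s) = p1 s" "p2 (h s) = p2 s" using h(2) sH by auto
      show "h s = s" using R2[OF jj sev hsev pr ns] hc(1) img by simp
    qed
  qed
  have hid': "h s = s" if "s \<in> ?H" for s using hid that by blast
  let ?HT = "{x \<in> ?H. ?L x t}"
  have cHT: "config ?T ?HT"
  proof (rule configI)
    show "finite ?HT" using hist_fin[OF esP t] by simp
    show "?HT \<subseteq> ev ?T" by auto
    then show "?HT \<in> con ?T" by simp
    fix e e' assume "e \<in> ?HT" "leq ?T e' e"
    then show "e' \<in> ?HT" by (auto intro: rtranclp_trans)
  qed
  have "h ` ?HT = ?HT" using hid' by (auto simp: image_iff)
  then have cP: "config P ?HT" using esp_mapD(3)[OF h(1) cHT] by simp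
  have "t \<in> ?HT" using hist_self[OF esP t] by simp
  then have "?H \<subseteq> ?HT" using config_hist_sub[OF cP] by blast
  then show ?thesis using r by blast
qed


lemma K:
  fixes j :: "'p \<Rightarrow> 'q"
  assumes w: "config P w" and w': "config P w'" and j: "inj_on j (w \<union> w')"
    and s1: "p1 ` w \<subseteq> p1 ` w'" and s2: "p2 ` w \<subseteq> p2 ` w'"
  shows "w \<subseteq> w'"
proof -
  let ?L = "(lnk A B P p1 p2)\<^sup>*\<^sup>*"
  have wev: "w \<subseteq> ev P" "w' \<subseteq> ev P" using configD(2)[OF w] configD(2)[OF w'] by auto
  have i1: "inj_on p1 w" "inj_on p1 w'" using esp_mapD(4)[OF p1map] w w' by auto
  have i2: "inj_on p2 w" "inj_on p2 w'" using esp_mapD(4)[OF p2map] w w' by auto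
  have main: "\<forall>s. card (hist P s) = n \<longrightarrow> s \<in> w \<longrightarrow> s \<in> w'" for n
  proof (induction n rule: less_induct)
    case (less n)
    show ?case
    proof (intro allI impI)
      fix s assume sn: "card (hist P s) = n" and sw: "s \<in> w"
      have sev: "s \<in> ev P" using sw wev by blast
      have hsw: "hist P s \<subseteq> w" using config_hist_sub[OF w sw] .
      have IH: "shist P s \<subseteq> w'"
      proof
        fix r assume "r \<in> shist P s"
        then have rs: "r \<in> hist P s" "r \<noteq> s" unfolding shist_def by auto
        have "hist P r \<subseteq> hist P s" using hist_mono[OF esP rs(1)] .
        moreover have "s \<notin> hist P r"
          using rs es_D(4)[OF esP] unfolding hist_def by auto
        ultimately have "hist P r \<subset> hist P s" using hist_self[OF esP sev] by blast
        then have "card (hist P r) < n" using sn hist_fin[OF esP sev] psubset_card_mono by blast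
        moreover have "r \<in> w" using hsw rs(1) by blast
        ultimately show "r \<in> w'" using less by blast
      qed
      obtain s' where s': "s' \<in> w'" "p1 s' = p1 s" using s1 sw by (metis image_iff subsetD)
      have s'ev: "s' \<in> ev P" using s' wev by blast
      obtain s'' where s'': "s'' \<in> w'" "p2 s'' = p2 s" using s2 sw by (metis image_iff subsetD)
      have "f (p1 s'') = f (p1 s')"
        using pcomm[of s''] pcomm[OF sev] s'' s' wev by auto
      moreover have "inj_on f (p1 ` w')" using esp_mapD(4)[OF PB_facts(4) esp_mapD(3)[OF p1map w']] .
      moreover have "p1 s'' \<in> p1 ` w'" using s''(1) by (rule imageI)
      moreover have "p1 s' \<in> p1 ` w'" using s'(1) by (rule imageI)
      ultimately have "p1 s'' = p1 s'" by (meson inj_onD)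
      then have "s'' = s'" using i1(2) s'(1,2) s''(1) by (metis inj_onD)
      then have pr: "p1 s' = p1 s" "p2 s' = p2 s" using s' s'' by auto
      have hs'w: "hist P s' \<subseteq> w'" using config_hist_sub[OF w' s'(1)] .
      have js: "inj_on j (hist P s)" using j hsw inj_on_subset by blast
      have js': "inj_on j (hist P s')" using j hs'w inj_on_subset by blast
      have sub1: "shist P s' \<subseteq> shist P s"
      proof
        fix r assume r: "r \<in> shist P s'"
        then have "r \<in> hist P s'" "r \<noteq> s'" unfolding shist_def by auto
        then have Lr: "?L r s'" using G[OF js' s'ev] by blast
        have "r \<in> shist P s \<or> r = s'"
          using Lr
        proof (induction rule: converse_rtranclp_induct)
          case base then show ?case by simp
        next
          case (step y z)
          have zw': "z \<in> w'" using step.IH IH s'(1) by blast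
          have yz: "leq P y z" using step.hyps(1) unfolding lnk_def by simp
          have yw': "y \<in> w'" using configD(4)[OF w' zw' yz] .
          define z0 where "z0 = (if z = s' then s else z)"
          have z0h: "z0 \<in> hist P s" "p1 z0 = p1 z" "p2 z0 = p2 z"
            using step.IH pr hist_self[OF esP sev] unfolding z0_def shist_def by auto
          have z0ev: "z0 \<in> ev P" using z0h(1) hsw wev by blast
          have vin: "v \<in> w'" if "v \<in> hist P s" "v \<noteq> s" for v
            using that IH unfolding shist_def by blast
          from step.hyps(1) have "leq A (p1 y) (p1 z0) \<or> leq B (p2 y) (p2 z0)"
            using z0h unfolding lnk_def by simp
          then show ?case
          proof
            assume "leq A (p1 y) (p1 z0)"
            then obtain v where v: "v \<in> hist P z0" "p1 v = p1 y" using img_hist[OF esP p1map z0ev] by blast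
            have vs: "v \<in> hist P s" using v(1) hist_mono[OF esP z0h(1)] by blast
            show ?case
            proof (cases "v = s")
              case True
              then have "p1 y = p1 s'" using v pr by simp
              then have "y = s'" using i1(2) yw' s'(1) by (auto dest: inj_onD)
              then show ?thesis by simp
            next
              case False
              then have "v \<in> w'" using vin vs by blast
              then have "v = y" using i1(2) yw' v(2) by (auto dest: inj_onD)
              then show ?thesis using vs False unfolding shist_def by simp
            qed
          next
            assume "leq B (p2 y) (p2 z0)"
            then obtain v where v: "v \<in> hist P z0" "p2 v = p2 y" using img_hist[OF esP p2map z0ev] by blast
            have vs: "v \<in> hist P s" using v(1) hist_mono[OF esP z0h(1)] by blast
            show ?case
            proof (cases "v = s")
              case True
              then have "p2 y = p2 s'" using v pr by simp
              then have "y = s'" using i2(2) yw' s'(1) by (auto dest: inj_onD)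
              then show ?thesis by simp
            next
              case False
              then have "v \<in> w'" using vin vs by blast
              then have "v = y" using i2(2) yw' v(2) by (auto dest: inj_onD)
              then show ?thesis using vs False unfolding shist_def by simp
            qed
          qed
        qed
        then show "r \<in> shist P s" using \<open>r \<noteq> s'\<close> by blast
      qed
      have sub2: "shist P s \<subseteq> shist P s'"
      proof
        fix r assume r: "r \<in> shist P s"
        then have "r \<in> hist P s" "r \<noteq> s" unfolding shist_def by auto
        then have Lr: "?L r s" using G[OF js sev] by blast
        have "r \<in> shist P s' \<or> r = s"
          using Lr
        proof (induction rule: converse_rtranclp_induct)
          case base then show ?case by simp
        next
          case (step y z)
          have zs: "leq P z s" using lnk_leq[OF esP step.hyps(2) sev] .
          have yz: "leq P y z" using step.hyps(1) unfolding lnk_def by simp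
          have yh: "y \<in> hist P s" using es_D(5)[OF esP yz zs] unfolding hist_def by simp
          show ?case
          proof (cases "y = s")
            case True then show ?thesis by simp
          next
            case ys: False
            then have yw': "y \<in> w'" using IH yh unfolding shist_def by blast
            have ys': "y \<noteq> s'"
            proof
              assume "y = s'"
              then have "s' \<in> w" using yh hsw by blast
              then have "s' = s" using i1(1) sw pr(1) by (metis inj_onD)
              then show False using ys \<open>y = s'\<close> by simp
            qed
            define z0 where "z0 = (if z = s then s' else z)"
            have z0h: "z0 \<in> hist P s'" "p1 z0 = p1 z" "p2 z0 = p2 z"
              using step.IH pr hist_self[OF esP s'ev] unfolding z0_def shist_def by auto
            have z0ev: "z0 \<in> ev P" using z0h(1) hs'w wev by blast
            from step.hyps(1) have "leq A (p1 y) (p1 z0) \<or> leq B (p2 y) (p2 z0)"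
              using z0h unfolding lnk_def by simp
            then have "y \<in> hist P s'"
            proof
              assume "leq A (p1 y) (p1 z0)"
              then obtain v where v: "v \<in> hist P z0" "p1 v = p1 y" using img_hist[OF esP p1map z0ev] by blast
              have vs: "v \<in> hist P s'" using v(1) hist_mono[OF esP z0h(1)] by blast
              then have "v \<in> w'" using hs'w by blast
              then have "v = y" using i1(2) yw' v(2) by (metis inj_onD)
              then show ?thesis using vs by simp
            next
              assume "leq B (p2 y) (p2 z0)"
              then obtain v where v: "v \<in> hist P z0" "p2 v = p2 y" using img_hist[OF esP p2map z0ev] by blast
              have vs: "v \<in> hist P s'" using v(1) hist_mono[OF esP z0h(1)] by blast
              then have "v \<in> w'" using hs'w by blast
              then have "v = y" using i2(2) yw' v(2) by (metis inj_onD)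
              then show ?thesis using vs by simp
            qed
            then show ?thesis using ys' unfolding shist_def by simp
          qed
        qed
        then show "r \<in> shist P s'" using \<open>r \<noteq> s\<close> by blast
      qed
      have eqs: "shist P s' = shist P s" using sub1 sub2 by blast
      have ns: "s' \<notin> shist P s" using eqs unfolding shist_def by blast
      have cfg: "config P (insert s' (shist P s))"
        using hist_config[OF esP s'ev] hist_shist[OF esP s'ev] eqs by simp
      have "s' = s" using R2[OF js sev s'ev pr ns cfg] .
      then show "s \<in> w'" using s'(1) by simp
    qed
  qed
  show ?thesis using main by blast
qed


lemma TB:
  fixes j :: "'p \<Rightarrow> 'q"
  assumes w: "config P w" and w': "config P w'" and j: "inj_on j (w \<union> w')" and p: "p \<in> w"
    and pa: "p1 p \<in> p1 ` w'" and pb: "p2 p \<in> p2 ` w'"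
    and crossA: "\<forall>a\<in>p1 ` w'. \<forall>a'\<in>p1 ` w. f a = f a' \<longrightarrow> a = a'"
    and crossB: "\<forall>b\<in>p2 ` w'. \<forall>b'\<in>p2 ` w. g b = g b' \<longrightarrow> b = b'"
  shows "p \<in> w'"
proof -
  let ?L = "(lnk A B P p1 p2)\<^sup>*\<^sup>*"
  have wev: "w \<subseteq> ev P" "w' \<subseteq> ev P" using configD(2)[OF w] configD(2)[OF w'] by auto
  have pev: "p \<in> ev P" using p wev by blast
  have hpw: "hist P p \<subseteq> w" using config_hist_sub[OF w p] .
  have hc: "config P (hist P p)" using hist_config[OF esP pev] .
  have jh: "inj_on j (hist P p)" using j hpw inj_on_subset by blast
  have jh2: "inj_on j (hist P p \<union> w')" using j hpw inj_on_subset[of j "w \<union> w'"] by blast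
  have cA: "config A (p1 ` w')" using esp_mapD(3)[OF p1map w'] .
  have cB: "config B (p2 ` w')" using esp_mapD(3)[OF p2map w'] .
  have Q: "p1 r \<in> p1 ` w' \<and> p2 r \<in> p2 ` w'" if r: "r \<in> hist P p" for r
  proof -
    have "?L r p" using G[OF jh pev r] .
    then show ?thesis
    proof (induction rule: converse_rtranclp_induct)
      case base then show ?case using pa pb by simp
    next
      case (step y z)
      have zp: "leq P z p" using lnk_leq[OF esP step.hyps(2) pev] .
      have yz: "leq P y z" using step.hyps(1) unfolding lnk_def by simp
      have yw: "y \<in> w" using es_D(5)[OF esP yz zp] hpw unfolding hist_def by blast
      have yev: "y \<in> ev P" using yw wev by blast
      from step.hyps(1) have "leq A (p1 y) (p1 z) \<or> leq B (p2 y) (p2 z)" unfolding lnk_def by simp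
      then show ?case
      proof
        assume "leq A (p1 y) (p1 z)"
        then have y1: "p1 y \<in> p1 ` w'" using configD(4)[OF cA] step.IH by blast
        then obtain u where u: "u \<in> w'" "p1 u = p1 y" by (metis imageE)
        have uev: "u \<in> ev P" using u wev by blast
        have "g (p2 u) = g (p2 y)" using pcomm[OF uev] pcomm[OF yev] u(2) by simp
        moreover have "p2 u \<in> p2 ` w'" using u(1) by (rule imageI)
        moreover have "p2 y \<in> p2 ` w" using yw by (rule imageI)
        ultimately have "p2 u = p2 y" using crossB by blast
        then have "p2 y \<in> p2 ` w'" using u(1) by (metis imageI)
        then show ?thesis using y1 by simp
      next
        assume "leq B (p2 y) (p2 z)"
        then have y2: "p2 y \<in> p2 ` w'" using configD(4)[OF cB] step.IH by blast
        then obtain u where u: "u \<in> w'" "p2 u = p2 y" by (metis imageE)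
        have uev: "u \<in> ev P" using u wev by blast
        have "f (p1 u) = f (p1 y)" using pcomm[OF uev] pcomm[OF yev] u(2) by simp
        moreover have "p1 u \<in> p1 ` w'" using u(1) by (rule imageI)
        moreover have "p1 y \<in> p1 ` w" using yw by (rule imageI)
        ultimately have "p1 u = p1 y" using crossA by blast
        then have "p1 y \<in> p1 ` w'" using u(1) by (metis imageI)
        then show ?thesis using y2 by simp
      qed
    qed
  qed
  have "p1 ` hist P p \<subseteq> p1 ` w'" "p2 ` hist P p \<subseteq> p2 ` w'" using Q by auto
  then have "hist P p \<subseteq> w'" using K[OF hc w' jh2] by blast
  then show ?thesis using hist_self[OF esP pev] by blast
qed

end



definition Qi :: "'q esp \<Rightarrow> ('q \<Rightarrow> nat \<times> 'x) \<Rightarrow> nat \<Rightarrow> 'q esp" where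
  "Qi Q q i = subesp Q {e \<in> ev Q. fst (q e) = i} (\<lambda>e. if i = 1 then \<not> pol Q e else pol Q e)"

lemma CC_ev_split:
  assumes "c \<in> ev (CC X)" shows "\<exists>i a. c = (i, a) \<and> (i = 1 \<or> i = 2) \<and> a \<in> ev X"
  using assms by (auto simp: CC_simps evc_def)

lemma Qmap:
  assumes Q: "es Q" and X: "es X" and q: "esp_map Q (CC X) q" and i: "i = 1 \<or> i = 2"
  shows "esp_map (Qi Q q i) X (snd \<circ> q)"
  unfolding esp_map_def
proof (intro conjI ballI allI impI)
  let ?S = "{e \<in> ev Q. fst (q e) = i}"
  fix e assume e: "e \<in> ev (Qi Q q i)"
  then have e': "e \<in> ev Q" "fst (q e) = i" by (auto simp: Qi_def)
  obtain k a where qe: "q e = (k, a)" "k = 1 \<or> k = 2" "a \<in> ev X"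
    using CC_ev_split[OF esp_mapD(1)[OF q e'(1)]] by blast
  have k: "k = i" using qe e' by simp
  show "(snd \<circ> q) e \<in> ev X" using qe by simp
  have "pol (CC X) (q e) = pol Q e" using esp_mapD(2)[OF q e'(1)] .
  then show "pol X ((snd \<circ> q) e) = pol (Qi Q q i) e"
    using qe k i by (auto simp: CC_simps Qi_def)
next
  let ?S = "{e \<in> ev Q. fst (q e) = i}"
  fix x assume x: "config (Qi Q q i) x"
  then have xs: "finite x" "x \<subseteq> ev Q" "x \<subseteq> ?S" "x \<in> con Q"
    and xdc: "\<And>e e'. e \<in> x \<Longrightarrow> leq Q e' e \<Longrightarrow> e' \<in> ?S \<Longrightarrow> e' \<in> x"
    unfolding Qi_def config_subesp by auto
  let ?y = "dcl Q x"
  have yc: "config Q ?y" using dcl_config[OF Q xs(4)] .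
  have xy: "x \<subseteq> ?y" unfolding dcl_def using xs(2) es_D(3)[OF Q] by blast
  have qy: "config (CC X) (q ` ?y)" "inj_on q ?y" using esp_mapD(3,4)[OF q yc] by auto
  have ct: "config X (tag i (q ` ?y))" using qy(1) i unfolding config_CC[OF X] by auto
  have teq: "tag i (q ` ?y) = (snd \<circ> q) ` x"
  proof
    show "tag i (q ` ?y) \<subseteq> (snd \<circ> q) ` x"
    proof
      fix a assume "a \<in> tag i (q ` ?y)"
      then obtain d where d: "d \<in> ?y" "q d = (i, a)" by (auto simp: image_iff)
      then obtain e where e: "e \<in> x" "leq Q d e" unfolding dcl_def by blast
      have "d \<in> ev Q" using es_D(1)[OF Q e(2)] .
      then have "d \<in> ?S" using d by simp
      then have "d \<in> x" using xdc e by blast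
      then show "a \<in> (snd \<circ> q) ` x" using d by (metis comp_apply image_eqI snd_conv)
    qed
    show "(snd \<circ> q) ` x \<subseteq> tag i (q ` ?y)"
    proof
      fix a assume "a \<in> (snd \<circ> q) ` x"
      then obtain e where e: "e \<in> x" "a = snd (q e)" by auto
      have "fst (q e) = i" using e xs(3) by blast
      then have "q e = (i, a)" using e by (metis prod.collapse)
      then show "a \<in> tag i (q ` ?y)" using e xy by (metis imageI subsetD tag_iff)
    qed
  qed
  show "config X ((snd \<circ> q) ` x)" using ct teq by simp
  show "inj_on (snd \<circ> q) x"
  proof (rule inj_onI)
    fix e e' assume a: "e \<in> x" "e' \<in> x" "(snd \<circ> q) e = (snd \<circ> q) e'"
    have "fst (q e) = i" "fst (q e') = i" using a xs(3) by auto
    then have "q e = q e'" using a(3) by (simp add: prod_eq_iff)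
    then show "e = e'" using qy(2) a xy by (meson inj_onD subsetD)
  qed
qed

lemma es_Qi: "es Q \<Longrightarrow> es (Qi Q q i)"
  unfolding Qi_def by (rule es_subesp)

lemma cross_inj:
  assumes X: "es X" and cx: "config (CC X) x" and fm: "esp_map X Y f"
    and a: "a \<in> tag 1 x" "a' \<in> tag 2 x" "f a = f a'"
  shows "a = a'"
proof -
  have c: "config X (tag 1 x)" "config X (tag 2 x)"
    and b1: "\<forall>a. (2, a) \<in> x \<and> pol X a \<longrightarrow> (1, a) \<in> x"
    and b2: "\<forall>a. (1, a) \<in> x \<and> \<not> pol X a \<longrightarrow> (2, a) \<in> x"
    and sub: "x \<subseteq> evc X" using cx unfolding config_CC[OF X] by auto
  have ev: "a \<in> ev X" "a' \<in> ev X" using a sub by (auto simp: evc_iff)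
  have "pol X a = pol X a'" using esp_mapD(2)[OF fm ev(1)] esp_mapD(2)[OF fm ev(2)] a(3) by simp
  show ?thesis
  proof (cases "pol X a'")
    case True
    then have "a' \<in> tag 1 x" using b1 a(2) by simp
    then show ?thesis using esp_mapD(4)[OF fm c(1)] a by (meson inj_onD)
  next
    case False
    then have "a \<in> tag 2 x" using b2 a(1) \<open>pol X a = pol X a'\<close> by simp
    then show ?thesis using esp_mapD(4)[OF fm c(2)] a by (meson inj_onD)
  qed
qed




lemma univ_part:
  fixes A :: "'a esp" and B :: "'b esp" and C :: "'c esp" and P :: "'p esp"
    and f :: "'a \<Rightarrow> 'c" and g :: "'b \<Rightarrow> 'c" and p1 :: "'p \<Rightarrow> 'a" and p2 :: "'p \<Rightarrow> 'b"
    and Q :: "'q esp" and q1 :: "'q \<Rightarrow> nat \<times> 'a" and q2 :: "'q \<Rightarrow> nat \<times> 'b"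
  assumes PB: "PBa TYPE('q) A B C f g P p1 p2"
    and Q: "es Q" and q1: "esp_map Q (CC A) q1" and q2: "esp_map Q (CC B) q2"
    and qc: "\<forall>e\<in>ev Q. CCmap f (q1 e) = CCmap g (q2 e)"
  shows "\<exists>h. esp_map Q (CC P) h \<and> (\<forall>e\<in>ev Q. CCmap p1 (h e) = q1 e \<and> CCmap p2 (h e) = q2 e) \<and>
           (\<forall>h'. esp_map Q (CC P) h' \<and> (\<forall>e\<in>ev Q. CCmap p1 (h' e) = q1 e \<and> CCmap p2 (h' e) = q2 e)
                 \<longrightarrow> (\<forall>e\<in>ev Q. h' e = h e))"
proof -
  note F = PB_facts[OF PB]
  have esP: "es P" using esP[OF PB] .
  have p1m: "esp_map P A p1" using p1map[OF PB] .
  have p2m: "esp_map P B p2" using p2map[OF PB] .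
  have fs: "fst (q2 e) = fst (q1 e) \<and> f (snd (q1 e)) = g (snd (q2 e))" if "e \<in> ev Q" for e
  proof -
    have "CCmap f (q1 e) = CCmap g (q2 e)" using qc that by blast
    then show ?thesis by (cases "q1 e"; cases "q2 e") simp
  qed
  have fst2: "fst (q2 e) = fst (q1 e)" if "e \<in> ev Q" for e using fs[OF that] by simp
  have snd_c: "f (snd (q1 e)) = g (snd (q2 e))" if "e \<in> ev Q" for e using fs[OF that] by simp
  have tg: "fst (q1 e) = 1 \<or> fst (q1 e) = 2" if "e \<in> ev Q" for e
    using CC_ev_split[OF esp_mapD(1)[OF q1 that]] by auto
  have Qeq: "Qi Q q2 i = Qi Q q1 i" for i
  proof -
    have "{e \<in> ev Q. fst (q2 e) = i} = {e \<in> ev Q. fst (q1 e) = i}" using fst2 by auto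
    then show ?thesis unfolding Qi_def by simp
  qed
  have ex: "\<exists>h. esp_map (Qi Q q1 i) P h \<and> (\<forall>e\<in>ev (Qi Q q1 i). p1 (h e) = (snd \<circ> q1) e \<and> p2 (h e) = (snd \<circ> q2) e)"
    if i: "i = 1 \<or> i = 2" for i
  proof (rule pb_exists[OF F(6)])
    show "es (Qi Q q1 i)" using es_Qi[OF Q] .
    show "inj_on (id :: 'q \<Rightarrow> 'q) (ev (Qi Q q1 i))" by simp
    show "esp_map (Qi Q q1 i) A (snd \<circ> q1)" using Qmap[OF Q F(1) q1 i] .
    show "esp_map (Qi Q q1 i) B (snd \<circ> q2)" using Qmap[OF Q F(2) q2 i] Qeq by simp
    show "\<forall>e\<in>ev (Qi Q q1 i). f ((snd \<circ> q1) e) = g ((snd \<circ> q2) e)"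
      using snd_c by (simp add: Qi_def)
  qed
  then obtain hh where hh: "\<And>i. i = 1 \<or> i = 2 \<Longrightarrow> esp_map (Qi Q q1 i) P (hh i) \<and>
      (\<forall>e\<in>ev (Qi Q q1 i). p1 (hh i e) = (snd \<circ> q1) e \<and> p2 (hh i e) = (snd \<circ> q2) e)"
    by metis
  have evQi: "ev (Qi Q q1 i) = {e \<in> ev Q. fst (q1 e) = i}" for i by (auto simp: Qi_def)
  define h where "h = (\<lambda>e. (fst (q1 e), hh (fst (q1 e)) e))"
  have hh_e: "hh (fst (q1 e)) e \<in> ev P \<and> pol P (hh (fst (q1 e)) e) = (if fst (q1 e) = 1 then \<not> pol Q e else pol Q e)
      \<and> p1 (hh (fst (q1 e)) e) = snd (q1 e) \<and> p2 (hh (fst (q1 e)) e) = snd (q2 e)"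
    if e: "e \<in> ev Q" for e
  proof -
    let ?i = "fst (q1 e)"
    have eQ: "e \<in> ev (Qi Q q1 ?i)" using e evQi by simp
    have m: "esp_map (Qi Q q1 ?i) P (hh ?i)" using hh tg[OF e] by blast
    have c: "p1 (hh ?i e) = snd (q1 e) \<and> p2 (hh ?i e) = snd (q2 e)" using hh[OF tg[OF e]] eQ by simp
    have "pol P (hh ?i e) = pol (Qi Q q1 ?i) e" using esp_mapD(2)[OF m eQ] .
    then show ?thesis using esp_mapD(1)[OF m eQ] c by (simp add: Qi_def)
  qed
  have h_ev: "h e \<in> ev (CC P) \<and> pol (CC P) (h e) = pol Q e" if e: "e \<in> ev Q" for e
    using hh_e[OF e] tg[OF e] unfolding h_def by (auto simp: CC_simps evc_iff polc_def)
  have h_cfg: "config (CC P) (h ` z) \<and> inj_on h z" if z: "config Q z" for z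
  proof -
    have zev: "z \<subseteq> ev Q" using configD(2)[OF z] .
    define zi where "zi i = {e \<in> z. fst (q1 e) = i}" for i
    have zic: "config (Qi Q q1 i) (zi i)" for i
      unfolding Qi_def config_subesp zi_def
      using configD[OF z] es_D(10)[OF Q configD(3)[OF z]] by auto
    define w where "w i = hh i ` zi i" for i
    have wc: "config P (w i) \<and> inj_on (hh i) (zi i)" if i: "i = 1 \<or> i = 2" for i
      using esp_mapD(3,4)[OF conjunct1[OF hh[OF i]] zic] unfolding w_def by auto
    have tagh: "tag i (h ` z) = w i" for i
      unfolding w_def zi_def h_def by (auto simp: image_iff)
    have cx: "config (CC A) (q1 ` z)" using esp_mapD(3)[OF q1 z] .
    have cy: "config (CC B) (q2 ` z)" using esp_mapD(3)[OF q2 z] .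
    have pw1: "p1 ` w i = tag i (q1 ` z)" for i
    proof -
      have "p1 ` w i = (\<lambda>e. snd (q1 e)) ` zi i"
        unfolding w_def image_image zi_def using hh_e zev by (intro image_cong) auto
      also have "\<dots> = tag i (q1 ` z)"
      proof
        show "(\<lambda>e. snd (q1 e)) ` zi i \<subseteq> tag i (q1 ` z)"
        proof
          fix a assume "a \<in> (\<lambda>e. snd (q1 e)) ` zi i"
          then obtain e where e: "e \<in> z" "fst (q1 e) = i" "a = snd (q1 e)" unfolding zi_def by auto
          have "fst (q1 e) = i" using e by auto
          then have "q1 e = (i, a)" using e(3) by (simp add: prod_eq_iff)
          then show "a \<in> tag i (q1 ` z)" using e(1) by (metis imageI tag_iff)
        qed
        show "tag i (q1 ` z) \<subseteq> (\<lambda>e. snd (q1 e)) ` zi i"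
        proof
          fix a assume "a \<in> tag i (q1 ` z)"
          then obtain e where e: "e \<in> z" "q1 e = (i, a)" by (auto simp: image_iff)
          have "fst (q1 e) = i" using e by (auto simp: subset_iff)
          then show "a \<in> (\<lambda>e. snd (q1 e)) ` zi i" using e unfolding zi_def by (metis (mono_tags, lifting) image_eqI mem_Collect_eq snd_conv)
        qed
      qed
      finally show ?thesis .
    qed
    have pw2: "p2 ` w i = tag i (q2 ` z)" for i
    proof -
      have "p2 ` w i = (\<lambda>e. snd (q2 e)) ` zi i"
        unfolding w_def image_image zi_def using hh_e zev by (intro image_cong) auto
      also have "\<dots> = tag i (q2 ` z)"
      proof
        show "(\<lambda>e. snd (q2 e)) ` zi i \<subseteq> tag i (q2 ` z)"
        proof
          fix a assume "a \<in> (\<lambda>e. snd (q2 e)) ` zi i"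
          then obtain e where e: "e \<in> z" "fst (q1 e) = i" "a = snd (q2 e)" unfolding zi_def by auto
          have "fst (q2 e) = i" using e fst2 zev by auto
          then have "q2 e = (i, a)" using e(3) by (simp add: prod_eq_iff)
          then show "a \<in> tag i (q2 ` z)" using e(1) by (metis imageI tag_iff)
        qed
        show "tag i (q2 ` z) \<subseteq> (\<lambda>e. snd (q2 e)) ` zi i"
        proof
          fix a assume "a \<in> tag i (q2 ` z)"
          then obtain e where e: "e \<in> z" "q2 e = (i, a)" by (auto simp: image_iff)
          have "e \<in> ev Q" using e(1) zev by blast
          then have "fst (q1 e) = i" using e(2) fst2 by (metis fst_conv)
          then show "a \<in> (\<lambda>e. snd (q2 e)) ` zi i" using e unfolding zi_def by (metis (mono_tags, lifting) image_eqI mem_Collect_eq snd_conv)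
        qed
      qed
      finally show ?thesis .
    qed
    define jj where "jj p = (if p \<in> w 1 then inv_into (zi 1) (hh 1) p else inv_into (zi 2) (hh 2) p)" for p
    have jj: "inj_on jj (w 1 \<union> w 2)"
    proof (rule inj_onI)
      fix p p' assume a: "p \<in> w 1 \<union> w 2" "p' \<in> w 1 \<union> w 2" "jj p = jj p'"
      have k1: "inv_into (zi 1) (hh 1) x \<in> zi 1 \<and> hh 1 (inv_into (zi 1) (hh 1) x) = x" if "x \<in> w 1" for x
        using that unfolding w_def by (simp add: inv_into_into f_inv_into_f)
      have k2: "inv_into (zi 2) (hh 2) x \<in> zi 2 \<and> hh 2 (inv_into (zi 2) (hh 2) x) = x" if "x \<in> w 2" for x
        using that unfolding w_def by (simp add: inv_into_into f_inv_into_f)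
      have dis: "zi 1 \<inter> zi 2 = {}" unfolding zi_def by auto
      show "p = p'"
      proof (cases "p \<in> w 1"; cases "p' \<in> w 1")
        assume h1: "p \<in> w 1" "p' \<in> w 1"
        have "p = hh 1 (jj p)" using k1[OF h1(1)] h1(1) unfolding jj_def by simp
        moreover have "p' = hh 1 (jj p')" using k1[OF h1(2)] h1(2) unfolding jj_def by simp
        ultimately show ?thesis using a(3) by simp
      next
        assume h1: "p \<in> w 1" "p' \<notin> w 1"
        have x1: "jj p \<in> zi 1" using k1[OF h1(1)] h1(1) unfolding jj_def by simp
        have "p' \<in> w 2" using a(2) h1(2) by blast
        then have x2: "jj p' \<in> zi 2" using k2 h1(2) unfolding jj_def by simp
        have "jj p \<in> zi 1 \<inter> zi 2" using x1 x2 a(3) by simp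
        then show ?thesis using dis by blast
      next
        assume h1: "p \<notin> w 1" "p' \<in> w 1"
        have x1: "jj p' \<in> zi 1" using k1[OF h1(2)] h1(2) unfolding jj_def by simp
        have "p \<in> w 2" using a(1) h1(1) by blast
        then have x2: "jj p \<in> zi 2" using k2 h1(1) unfolding jj_def by simp
        have "jj p \<in> zi 1 \<inter> zi 2" using x1 x2 a(3) by simp
        then show ?thesis using dis by blast
      next
        assume h1: "p \<notin> w 1" "p' \<notin> w 1"
        then have h2: "p \<in> w 2" "p' \<in> w 2" using a by auto
        have "p = hh 2 (jj p)" using k2[OF h2(1)] h1(1) unfolding jj_def by simp
        moreover have "p' = hh 2 (jj p')" using k2[OF h2(2)] h1(2) unfolding jj_def by simp
        ultimately show ?thesis using a(3) by simp
      qed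
    qed
    have jj': "inj_on jj (w 2 \<union> w 1)" using jj by (simp add: Un_commute)
    have xb: "\<forall>a. (2, a) \<in> q1 ` z \<and> pol A a \<longrightarrow> (1, a) \<in> q1 ` z"
      "\<forall>a. (1, a) \<in> q1 ` z \<and> \<not> pol A a \<longrightarrow> (2, a) \<in> q1 ` z"
      using cx unfolding config_CC[OF F(1)] by auto
    have yb: "\<forall>a. (2, a) \<in> q2 ` z \<and> pol B a \<longrightarrow> (1, a) \<in> q2 ` z"
      "\<forall>a. (1, a) \<in> q2 ` z \<and> \<not> pol B a \<longrightarrow> (2, a) \<in> q2 ` z"
      using cy unfolding config_CC[OF F(2)] by auto
    have crA: "\<forall>a\<in>p1 ` w 1. \<forall>a'\<in>p1 ` w 2. f a = f a' \<longrightarrow> a = a'"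
      unfolding pw1 using cross_inj[OF F(1) cx F(4)] by blast
    have crA': "\<forall>a\<in>p1 ` w 2. \<forall>a'\<in>p1 ` w 1. f a = f a' \<longrightarrow> a = a'"
      unfolding pw1 using cross_inj[OF F(1) cx F(4)] by metis
    have crB: "\<forall>a\<in>p2 ` w 1. \<forall>a'\<in>p2 ` w 2. g a = g a' \<longrightarrow> a = a'"
      unfolding pw2 using cross_inj[OF F(2) cy F(5)] by blast
    have crB': "\<forall>a\<in>p2 ` w 2. \<forall>a'\<in>p2 ` w 1. g a = g a' \<longrightarrow> a = a'"
      unfolding pw2 using cross_inj[OF F(2) cy F(5)] by metis
    have cw1: "config P (w 1)" using wc[of 1] by simp
    have cw2: "config P (w 2)" using wc[of 2] by simp
    have w12: "w 1 \<subseteq> ev P" "w 2 \<subseteq> ev P" using configD(2)[OF cw1] configD(2)[OF cw2] by simp_all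
    have b1: "(1, p) \<in> h ` z" if a: "(2, p) \<in> h ` z \<and> pol P p" for p
    proof -
      have "p \<in> tag 2 (h ` z)" using a by simp
      then have pw: "p \<in> w 2" by (metis tagh)
      have pev: "p \<in> ev P" using pw w12 by blast
      have pol1: "pol A (p1 p) = pol P p" "pol B (p2 p) = pol P p"
        using esp_mapD(2)[OF p1m pev] esp_mapD(2)[OF p2m pev] by simp_all
      have "p1 p \<in> tag 2 (q1 ` z)" using pw pw1[of 2] by auto
      then have "p1 p \<in> p1 ` w 1" using xb(1) pol1 a pw1[of 1] by simp
      moreover have "p2 p \<in> tag 2 (q2 ` z)" using pw pw2[of 2] by auto
      then have "p2 p \<in> p2 ` w 1" using yb(1) pol1 a pw2[of 1] by simp
      ultimately have "p \<in> w 1"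
        using TB[OF PB cw2 cw1 jj' pw _ _ crA crB] by simp
      then show ?thesis by (metis tagh tag_iff)
    qed
    have b2: "(2, p) \<in> h ` z" if a: "(1, p) \<in> h ` z \<and> \<not> pol P p" for p
    proof -
      have "p \<in> tag 1 (h ` z)" using a by simp
      then have pw: "p \<in> w 1" by (metis tagh)
      have pev: "p \<in> ev P" using pw w12 by blast
      have pol1: "pol A (p1 p) = pol P p" "pol B (p2 p) = pol P p"
        using esp_mapD(2)[OF p1m pev] esp_mapD(2)[OF p2m pev] by simp_all
      have "p1 p \<in> tag 1 (q1 ` z)" using pw pw1[of 1] by auto
      then have "p1 p \<in> p1 ` w 2" using xb(2) pol1 a pw1[of 2] by simp
      moreover have "p2 p \<in> tag 1 (q2 ` z)" using pw pw2[of 1] by auto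
      then have "p2 p \<in> p2 ` w 2" using yb(2) pol1 a pw2[of 2] by simp
      ultimately have "p \<in> w 2"
        using TB[OF PB cw1 cw2 jj pw _ _ crA' crB'] by simp
      then show ?thesis by (metis tagh tag_iff)
    qed
    have cfg: "config (CC P) (h ` z)"
      unfolding config_CC[OF esP]
    proof (intro conjI)
      show "finite (h ` z)" using configD(1)[OF z] by simp
      show "h ` z \<subseteq> evc P" using h_ev zev by (auto simp: CC_simps)
      show "config P (tag 1 (h ` z))" "config P (tag 2 (h ` z))" using tagh wc by auto
      show "\<forall>a. (2, a) \<in> h ` z \<and> pol P a \<longrightarrow> (1, a) \<in> h ` z" using b1 by blast
      show "\<forall>a. (1, a) \<in> h ` z \<and> \<not> pol P a \<longrightarrow> (2, a) \<in> h ` z" using b2 by blast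
    qed
    have inj: "inj_on h z"
    proof (rule inj_onI)
      fix e e' assume a: "e \<in> z" "e' \<in> z" "h e = h e'"
      then have i: "fst (q1 e) = fst (q1 e')" "hh (fst (q1 e)) e = hh (fst (q1 e)) e'"
        unfolding h_def by auto
      have "e \<in> zi (fst (q1 e))" "e' \<in> zi (fst (q1 e))" using a i unfolding zi_def by auto
      moreover have "inj_on (hh (fst (q1 e))) (zi (fst (q1 e)))" using wc tg a zev by blast
      ultimately show "e = e'" using i(2) by (meson inj_onD)
    qed
    show ?thesis using cfg inj by simp
  qed
  have hmap: "esp_map Q (CC P) h" unfolding esp_map_def using h_ev h_cfg by blast
  have hcomm: "\<forall>e\<in>ev Q. CCmap p1 (h e) = q1 e \<and> CCmap p2 (h e) = q2 e"
  proof
    fix e assume e: "e \<in> ev Q"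
    then show "CCmap p1 (h e) = q1 e \<and> CCmap p2 (h e) = q2 e"
      using hh_e[OF e] fst2[OF e] unfolding h_def by (simp add: prod_eq_iff)
  qed
  have huniq: "\<forall>e\<in>ev Q. h' e = h e"
    if h': "esp_map Q (CC P) h'" "\<forall>e\<in>ev Q. CCmap p1 (h' e) = q1 e \<and> CCmap p2 (h' e) = q2 e" for h'
  proof
    fix e assume e: "e \<in> ev Q"
    have fh: "fst (h' e) = fst (q1 e) \<and> p1 (snd (h' e)) = snd (q1 e) \<and> p2 (snd (h' e)) = snd (q2 e)"
      if "e \<in> ev Q" for e
    proof -
      obtain a b where ab: "h' e = (a, b)" by (cases "h' e")
      have "CCmap p1 (h' e) = q1 e" "CCmap p2 (h' e) = q2 e" using h'(2) that by auto
      then have "q1 e = (a, p1 b)" "q2 e = (a, p2 b)" using ab by auto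
      then show ?thesis using ab by simp
    qed
    let ?i = "fst (q1 e)"
    have i: "?i = 1 \<or> ?i = 2" using tg[OF e] .
    have Qeq': "Qi Q h' ?i = Qi Q q1 ?i"
    proof -
      have "{e \<in> ev Q. fst (h' e) = ?i} = {e \<in> ev Q. fst (q1 e) = ?i}" using fh by auto
      then show ?thesis unfolding Qi_def by simp
    qed
    have m': "esp_map (Qi Q q1 ?i) P (snd \<circ> h')" using Qmap[OF Q esP h'(1) i] Qeq' by simp
    have c': "\<forall>x\<in>ev (Qi Q q1 ?i). p1 ((snd \<circ> h') x) = (snd \<circ> q1) x \<and> p2 ((snd \<circ> h') x) = (snd \<circ> q2) x"
      using fh evQi by auto
    have eQ: "e \<in> ev (Qi Q q1 ?i)" using e evQi by simp
    have u1: "es (Qi Q q1 ?i)" using es_Qi[OF Q] .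
    have u2: "inj_on (id :: 'q \<Rightarrow> 'q) (ev (Qi Q q1 ?i))" by simp
    have u3: "esp_map (Qi Q q1 ?i) A (snd \<circ> q1)" using Qmap[OF Q F(1) q1 i] .
    have u4: "esp_map (Qi Q q1 ?i) B (snd \<circ> q2)" using Qmap[OF Q F(2) q2 i] Qeq by simp
    have u5: "\<forall>e\<in>ev (Qi Q q1 ?i). f ((snd \<circ> q1) e) = g ((snd \<circ> q2) e)"
      using snd_c by (simp add: Qi_def)
    have u6: "esp_map (Qi Q q1 ?i) P (hh ?i)" using hh[OF i] by blast
    have u7: "\<forall>x\<in>ev (Qi Q q1 ?i). p1 (hh ?i x) = (snd \<circ> q1) x \<and> p2 (hh ?i x) = (snd \<circ> q2) x"
      using hh[OF i] by blast
    have "(snd \<circ> h') e = hh ?i e"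
      using pb_unique[OF F(6) u1 u2 u3 u4 u5 m' c' u6 u7 eQ] .
    then show "h' e = h e" using fh[OF e] unfolding h_def by (simp add: prod_eq_iff)
  qed
  show ?thesis using hmap hcomm huniq by blast
qed




theorem mainTheorem7:
  fixes A :: "'a esp" and B :: "'b esp" and C :: "'c esp" and P :: "'p esp"
    and f :: "'a \<Rightarrow> 'c" and g :: "'b \<Rightarrow> 'c" and p1 :: "'p \<Rightarrow> 'a" and p2 :: "'p \<Rightarrow> 'b"
  assumes "es A" and "es B" and "es C"
    and "esp_map A C f" and "esp_map B C g"
    and "is_pullback TYPE('q) A B C f g P p1 p2"
  shows "is_pullback TYPE('q) (CC A) (CC B) (CC C) (CCmap f) (CCmap g)
           (CC P) (CCmap p1) (CCmap p2)"
proof -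
  have PB: "PBa TYPE('q) A B C f g P p1 p2" using assms unfolding PBa_def by simp
  have esP: "es P" using esP[OF PB] .
  have g1: "es (CC P)" using es_CC[OF esP] .
  have g2: "esp_map (CC P) (CC A) (CCmap p1)" using CCmap_map[OF esP assms(1) p1map[OF PB]] .
  have g3: "esp_map (CC P) (CC B) (CCmap p2)" using CCmap_map[OF esP assms(2) p2map[OF PB]] .
  have g4: "\<forall>e\<in>ev (CC P). CCmap f (CCmap p1 e) = CCmap g (CCmap p2 e)"
  proof
    fix e assume "e \<in> ev (CC P)"
    then obtain i a where e: "e = (i, a)" "a \<in> ev P" using CC_ev_split by blast
    show "CCmap f (CCmap p1 e) = CCmap g (CCmap p2 e)" using e pcomm[OF PB e(2)] by simp
  qed
  have g5: "\<forall>(Q :: 'q esp) q1 q2.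
        es Q \<and> esp_map Q (CC A) q1 \<and> esp_map Q (CC B) q2 \<and> (\<forall>e\<in>ev Q. CCmap f (q1 e) = CCmap g (q2 e)) \<longrightarrow>
        (\<exists>h. esp_map Q (CC P) h \<and> (\<forall>e\<in>ev Q. CCmap p1 (h e) = q1 e \<and> CCmap p2 (h e) = q2 e) \<and>
             (\<forall>h'. esp_map Q (CC P) h' \<and> (\<forall>e\<in>ev Q. CCmap p1 (h' e) = q1 e \<and> CCmap p2 (h' e) = q2 e)
                   \<longrightarrow> (\<forall>e\<in>ev Q. h' e = h e)))"
  proof (intro allI impI)
    fix Q :: "'q esp" and q1 q2
    assume a: "es Q \<and> esp_map Q (CC A) q1 \<and> esp_map Q (CC B) q2 \<and> (\<forall>e\<in>ev Q. CCmap f (q1 e) = CCmap g (q2 e))"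
    then have a1: "es Q" "esp_map Q (CC A) q1" "esp_map Q (CC B) q2"
      "\<forall>e\<in>ev Q. CCmap f (q1 e) = CCmap g (q2 e)" by auto
    show "\<exists>h. esp_map Q (CC P) h \<and> (\<forall>e\<in>ev Q. CCmap p1 (h e) = q1 e \<and> CCmap p2 (h e) = q2 e) \<and>
             (\<forall>h'. esp_map Q (CC P) h' \<and> (\<forall>e\<in>ev Q. CCmap p1 (h' e) = q1 e \<and> CCmap p2 (h' e) = q2 e)
                   \<longrightarrow> (\<forall>e\<in>ev Q. h' e = h e))"
      using univ_part[OF PB a1] .
  qed
  show ?thesis unfolding is_pullback_def by (intro conjI g1 g2 g3 g4 g5)
qed


end
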